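(* Let $X$ and $Y$ be disjoint sets, each of cardinality at least two, and let $M \le \mathrm{Sym}(X)$ and $N \le \mathrm{Sym}(Y)$ be nontrivial permutation groups. Then the box product $M \boxtimes N \le \mathrm{Sym}(V_Y)$ satisfies: (1) $M \boxtimes N$ is transitive on $V_Y$ if and only if $M$ is transitive on $X$; (2) $M \boxtimes N$ is primitive on $V_Y$ if and only if $M$ is primitive but not regular on $X$, and $N$ is transitive on $Y$.
   Context: Permutations act on the left. Let $T$ be the $(|X|,|Y|)$-biregular tree, with its natural bipartition $VT = V_X \sqcup V_Y$, where every vertex of $V_X$ has valency $|X|$ and every vertex of $V_Y$ has valency $|Y|$. An arc is an ordered pair $(u,w)$ of adjacent vertices, with origin $o(u,w)=u$ and terminus $t(u,w)=w$; $AT$ is the set of arcs, $A(v)$ the set of arcs with origin $v$, and $\overline{A}(v)$ the set of arcs with terminus $v$. Automorphisms of $T$ act on arcs in the obvious way. A legal colouring of $X$ and $Y$ is a map $c: AT \to X \cup Y$ such that for every $v \in V_X$ the restriction $c|_{A(v)}: A(v)\to X$ is a bijection, for every $v \in V_Y$ the restriction $c|_{A(v)}: A(v) \to Y$ is a bijection, and for every $v \in VT$ the restriction $c|_{\overline{A}(v)}$ is constant. For a legal colouring $c$, define $U_c(M,N)$ to be the set of $g \in \mathrm{Aut}(T)$ with $gV_X = V_X$ such that $c|_{A(gv)} \circ g|_{A(v)} \circ (c|_{A(v)})^{-1}$ lies in $M$ for all $v \in V_X$ and lies in $N$ for all $v \in V_Y$; this is a subgroup of $\mathrm{Aut}(T)$.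 The box product $M \boxtimes N$ is the subgroup of $\mathrm{Sym}(V_Y)$ induced by $U_c(M,N)$; up to permutation isomorphism it does not depend on the choice of legal colouring $c$. A transitive group is primitive if it preserves no equivalence relation other than the trivial and universal ones; it is regular if transitive with trivial point stabilisers. *)

theory Defs
  imports "HOL-Combinatorics.Permutations"
begin

definition perm_group_on :: "'a set \<Rightarrow> ('a \<Rightarrow> 'a) set \<Rightarrow> bool" where
  "perm_group_on \<Omega> G \<longleftrightarrow>
     (\<forall>g\<in>G. g permutes \<Omega>) \<and> id \<in> G \<and>
     (\<forall>g\<in>G. \<forall>h\<in>G. g \<circ> h \<in> G) \<and> (\<forall>g\<in>G. inv g \<in> G)"

definition transitive_on :: "('a \<Rightarrow> 'a) set \<Rightarrow> 'a set \<Rightarrow> bool" where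
  "transitive_on G \<Omega> \<longleftrightarrow> (\<forall>x\<in>\<Omega>. \<forall>y\<in>\<Omega>. \<exists>g\<in>G. g x = y)"

definition preserves_rel :: "('a \<Rightarrow> 'a) set \<Rightarrow> ('a \<times> 'a) set \<Rightarrow> bool" where
  "preserves_rel G R \<longleftrightarrow> (\<forall>g\<in>G. \<forall>(x,y)\<in>R. (g x, g y) \<in> R)"

definition primitive_on :: "('a \<Rightarrow> 'a) set \<Rightarrow> 'a set \<Rightarrow> bool" where
  "primitive_on G \<Omega> \<longleftrightarrow> transitive_on G \<Omega> \<and>
     (\<forall>R. equiv \<Omega> R \<and> preserves_rel G R \<longrightarrow> R = Id_on \<Omega> \<or> R = \<Omega> \<times> \<Omega>)"

definition regular_on :: "('a \<Rightarrow> 'a) set \<Rightarrow> 'a set \<Rightarrow> bool" where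
  "regular_on G \<Omega> \<longleftrightarrow> transitive_on G \<Omega> \<and>
     (\<forall>g\<in>G. \<forall>x\<in>\<Omega>. g x = x \<longrightarrow> (\<forall>y\<in>\<Omega>. g y = y))"

text \<open>Graphs on the vertex type 'v (all elements of 'v are vertices), given by a
  set E of arcs (ordered pairs of adjacent vertices).\<close>
definition reduced_walk :: "('v \<times> 'v) set \<Rightarrow> 'v list \<Rightarrow> bool" where
  "reduced_walk E xs \<longleftrightarrow> xs \<noteq> [] \<and>
     (\<forall>i. Suc i < length xs \<longrightarrow> (xs ! i, xs ! Suc i) \<in> E) \<and>
     (\<forall>i. Suc (Suc i) < length xs \<longrightarrow> xs ! i \<noteq> xs ! Suc (Suc i))"

definition is_tree :: "('v \<times> 'v) set \<Rightarrow> bool" where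
  "is_tree E \<longleftrightarrow> sym E \<and>
     (\<forall>u v. \<exists>!xs. reduced_walk E xs \<and> hd xs = u \<and> last xs = v)"

definition arcs_from :: "('v \<times> 'v) set \<Rightarrow> 'v \<Rightarrow> ('v \<times> 'v) set" where
  "arcs_from E v = {e \<in> E. fst e = v}"

definition arcs_to :: "('v \<times> 'v) set \<Rightarrow> 'v \<Rightarrow> ('v \<times> 'v) set" where
  "arcs_to E v = {e \<in> E. snd e = v}"

definition legal_colouring ::
  "('v \<times> 'v) set \<Rightarrow> 'v set \<Rightarrow> 'v set \<Rightarrow> 'a set \<Rightarrow> 'a set \<Rightarrow> ('v \<times> 'v \<Rightarrow> 'a) \<Rightarrow> bool" where
  "legal_colouring E VX VY X Y c \<longleftrightarrow>
     (\<forall>v\<in>VX. bij_betw c (arcs_from E v) X) \<and>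
     (\<forall>v\<in>VY. bij_betw c (arcs_from E v) Y) \<and>
     (\<forall>v. \<forall>e\<in>arcs_to E v. \<forall>e'\<in>arcs_to E v. c e = c e')"

text \<open>The (|X|,|Y|)-biregular tree with natural bipartition VX, VY, equipped with a
  legal colouring c of X and Y (the colouring forces the valencies).\<close>
definition biregular_coloured_tree ::
  "('v \<times> 'v) set \<Rightarrow> 'v set \<Rightarrow> 'v set \<Rightarrow> 'a set \<Rightarrow> 'a set \<Rightarrow> ('v \<times> 'v \<Rightarrow> 'a) \<Rightarrow> bool" where
  "biregular_coloured_tree E VX VY X Y c \<longleftrightarrow>
     is_tree E \<and> VX \<inter> VY = {} \<and> VX \<union> VY = UNIV \<and>
     (\<forall>(u,w)\<in>E. u \<in> VX \<longleftrightarrow> w \<in> VY) \<and>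
     legal_colouring E VX VY X Y c"

definition tree_aut :: "('v \<times> 'v) set \<Rightarrow> ('v \<Rightarrow> 'v) set" where
  "tree_aut E = {g. bij g \<and> (\<forall>u w. (u, w) \<in> E \<longleftrightarrow> (g u, g w) \<in> E)}"

text \<open>The local action c|A(gv) o g|A(v) o (c|A(v))^{-1} as a map on colours.\<close>
definition local_action ::
  "('v \<times> 'v) set \<Rightarrow> ('v \<times> 'v \<Rightarrow> 'a) \<Rightarrow> ('v \<Rightarrow> 'v) \<Rightarrow> 'v \<Rightarrow> 'a \<Rightarrow> 'a" where
  "local_action E c g v x =
     (let e = the_inv_into (arcs_from E v) c x in c (g (fst e), g (snd e)))"

definition in_group_on :: "('a \<Rightarrow> 'a) set \<Rightarrow> 'a set \<Rightarrow> ('a \<Rightarrow> 'a) \<Rightarrow> bool" where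
  "in_group_on G \<Omega> \<sigma> \<longleftrightarrow> (\<exists>m\<in>G. \<forall>x\<in>\<Omega>. m x = \<sigma> x)"

definition U_c ::
  "('v \<times> 'v) set \<Rightarrow> 'v set \<Rightarrow> 'v set \<Rightarrow> 'a set \<Rightarrow> 'a set \<Rightarrow> ('v \<times> 'v \<Rightarrow> 'a)
   \<Rightarrow> ('a \<Rightarrow> 'a) set \<Rightarrow> ('a \<Rightarrow> 'a) set \<Rightarrow> ('v \<Rightarrow> 'v) set" where
  "U_c E VX VY X Y c M N =
     {g \<in> tree_aut E. g ` VX = VX \<and>
        (\<forall>v\<in>VX. in_group_on M X (local_action E c g v)) \<and>
        (\<forall>v\<in>VY. in_group_on N Y (local_action E c g v))}"

text \<open>The box product: the permutation group on VY induced by U_c(M,N)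
  (each element restricted to VY and extended by the identity).\<close>
definition box_product ::
  "('v \<times> 'v) set \<Rightarrow> 'v set \<Rightarrow> 'v set \<Rightarrow> 'a set \<Rightarrow> 'a set \<Rightarrow> ('v \<times> 'v \<Rightarrow> 'a)
   \<Rightarrow> ('a \<Rightarrow> 'a) set \<Rightarrow> ('a \<Rightarrow> 'a) set \<Rightarrow> ('v \<Rightarrow> 'v) set" where
  "box_product E VX VY X Y c M N =
     (\<lambda>g v. if v \<in> VY then g v else v) ` U_c E VX VY X Y c M N"

end

theory Submission
  imports Defs
begin



locale btree =
  fixes E :: "('v \<times> 'v) set" and VX VY :: "'v set" and X Y :: "'a set" and c :: "'v \<times> 'v \<Rightarrow> 'a"
  assumes bct: "biregular_coloured_tree E VX VY X Y c"
    and XY: "X \<inter> Y = {}"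
    and X2: "\<exists>a\<in>X. \<exists>b\<in>X. a \<noteq> b" and Y2: "\<exists>a\<in>Y. \<exists>b\<in>Y. a \<noteq> b"
begin

lemma tree: "is_tree E" using bct unfolding biregular_coloured_tree_def by auto
lemma symE: "(u,v) \<in> E \<Longrightarrow> (v,u) \<in> E" using tree unfolding is_tree_def sym_def by auto
lemma disj: "VX \<inter> VY = {}" using bct unfolding biregular_coloured_tree_def by auto
lemma cover: "VX \<union> VY = UNIV" using bct unfolding biregular_coloured_tree_def by auto
lemma VY_iff: "v \<in> VY \<longleftrightarrow> v \<notin> VX" using disj cover by auto
lemma bip: "(u,w) \<in> E \<Longrightarrow> u \<in> VX \<longleftrightarrow> w \<notin> VX"
  using bct VY_iff unfolding biregular_coloured_tree_def by auto
lemma noloop: "(u,u) \<notin> E" using bip by blast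
lemma legal: "legal_colouring E VX VY X Y c" using bct unfolding biregular_coloured_tree_def by auto

definition cs :: "'v \<Rightarrow> 'a set" where "cs v = (if v \<in> VX then X else Y)"

lemma col_bij: "bij_betw c (arcs_from E v) (cs v)"
  using legal VY_iff unfolding legal_colouring_def cs_def by auto

lemma c_in: "(v,w) \<in> E \<Longrightarrow> c (v,w) \<in> cs v"
  using col_bij[of v] unfolding bij_betw_def arcs_from_def by auto

lemma c_inj: "(v,w) \<in> E \<Longrightarrow> (v,w') \<in> E \<Longrightarrow> c (v,w) = c (v,w') \<Longrightarrow> w = w'"
  using col_bij[of v] unfolding bij_betw_def inj_on_def arcs_from_def by auto

lemma c_surj: "a \<in> cs v \<Longrightarrow> \<exists>w. (v,w) \<in> E \<and> c (v,w) = a"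
proof -
  assume "a \<in> cs v"
  then obtain e where "e \<in> arcs_from E v" "c e = a" using col_bij[of v] unfolding bij_betw_def by (metis imageE)
  then show ?thesis unfolding arcs_from_def by (cases e) auto
qed

definition nb :: "'v \<Rightarrow> 'a \<Rightarrow> 'v" where "nb v a = (THE w. (v,w) \<in> E \<and> c (v,w) = a)"

lemma nb: "a \<in> cs v \<Longrightarrow> (v, nb v a) \<in> E \<and> c (v, nb v a) = a"
proof -
  assume a: "a \<in> cs v"
  then obtain w where w: "(v,w) \<in> E" "c (v,w) = a" using c_surj by blast
  have "\<exists>!w. (v,w) \<in> E \<and> c (v,w) = a" using w c_inj by blast
  then show ?thesis unfolding nb_def by (rule theI')
qed

lemma nb_eq: "(v,w) \<in> E \<Longrightarrow> nb v (c (v,w)) = w"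
  using nb[OF c_in] c_inj by blast

lemma cs_X: "v \<in> VX \<Longrightarrow> cs v = X" and cs_Y: "v \<notin> VX \<Longrightarrow> cs v = Y"
  unfolding cs_def by auto

lemma cs_ne: "\<exists>a. a \<in> cs v" using X2 Y2 unfolding cs_def by auto

lemma has_nb: "\<exists>w. (w,v) \<in> E"
  using cs_ne[of v] nb symE by blast

definition kap :: "'v \<Rightarrow> 'a" where "kap v = c (SOME w. (w,v) \<in> E, v)"

lemma kap: "(w,v) \<in> E \<Longrightarrow> c (w,v) = kap v"
proof -
  assume a: "(w,v) \<in> E"
  have s: "((SOME w. (w,v) \<in> E), v) \<in> E" using has_nb someI_ex by metis
  have 1: "(w,v) \<in> arcs_to E v" using a unfolding arcs_to_def by auto
  have 2: "((SOME w. (w,v) \<in> E), v) \<in> arcs_to E v" using s unfolding arcs_to_def by auto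
  have "\<forall>e\<in>arcs_to E v. \<forall>e'\<in>arcs_to E v. c e = c e'" using legal unfolding legal_colouring_def by blast
  then show ?thesis using 1 2 unfolding kap_def by blast
qed

lemma kap_in: "(w,v) \<in> E \<Longrightarrow> kap v \<in> cs w"
  using kap c_in by metis

lemma kap_inj: "(x,a) \<in> E \<Longrightarrow> (x,b) \<in> E \<Longrightarrow> kap a = kap b \<Longrightarrow> a = b"
  using kap c_inj by metis

end



context btree begin

lemma rwD: assumes "reduced_walk E xs"
  shows "xs \<noteq> []" "Suc i < length xs \<Longrightarrow> (xs!i, xs!Suc i) \<in> E"
    "Suc (Suc i) < length xs \<Longrightarrow> xs!i \<noteq> xs!Suc (Suc i)"
  using assms unfolding reduced_walk_def by auto

lemma rw_rev: "reduced_walk E xs \<Longrightarrow> reduced_walk E (rev xs)"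
  unfolding reduced_walk_def
proof (intro conjI allI impI)
  assume a: "xs \<noteq> [] \<and> (\<forall>i. Suc i < length xs \<longrightarrow> (xs ! i, xs ! Suc i) \<in> E) \<and>
    (\<forall>i. Suc (Suc i) < length xs \<longrightarrow> xs ! i \<noteq> xs ! Suc (Suc i))"
  then show "rev xs \<noteq> []" by auto
  fix i assume i: "Suc i < length (rev xs)"
  have "(xs ! (length xs - Suc (Suc i)), xs ! Suc (length xs - Suc (Suc i))) \<in> E"
    using a i by auto
  moreover have "Suc (length xs - Suc (Suc i)) = length xs - Suc i" using i by auto
  ultimately have "(xs ! (length xs - Suc (Suc i)), xs ! (length xs - Suc i)) \<in> E" by simp
  then show "(rev xs ! i, rev xs ! Suc i) \<in> E" using i symE by (auto simp: rev_nth)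
next
  fix i
  assume a: "xs \<noteq> [] \<and> (\<forall>i. Suc i < length xs \<longrightarrow> (xs ! i, xs ! Suc i) \<in> E) \<and>
    (\<forall>i. Suc (Suc i) < length xs \<longrightarrow> xs ! i \<noteq> xs ! Suc (Suc i))"
  assume i: "Suc (Suc i) < length (rev xs)"
  have "xs ! (length xs - Suc (Suc (Suc i))) \<noteq> xs ! Suc (Suc (length xs - Suc (Suc (Suc i))))"
    using a i by auto
  moreover have "Suc (Suc (length xs - Suc (Suc (Suc i)))) = length xs - Suc i" using i by auto
  ultimately show "rev xs ! i \<noteq> rev xs ! Suc (Suc i)" using i by (auto simp: rev_nth)
qed

lemma rw_take: "reduced_walk E xs \<Longrightarrow> 0 < n \<Longrightarrow> reduced_walk E (take n xs)"
  unfolding reduced_walk_def by auto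

lemma rw_drop: "reduced_walk E xs \<Longrightarrow> n < length xs \<Longrightarrow> reduced_walk E (drop n xs)"
  unfolding reduced_walk_def by (auto simp: add.commute)

lemma rw_append:
  assumes x: "reduced_walk E xs" and y: "reduced_walk E ys" and m: "last xs = hd ys"
    and nb2: "2 \<le> length xs \<Longrightarrow> 2 \<le> length ys \<Longrightarrow> xs ! (length xs - 2) \<noteq> ys ! 1"
  shows "reduced_walk E (xs @ tl ys)"
proof -
  let ?n = "length xs"
  have xn: "xs \<noteq> []" "ys \<noteq> []" using x y unfolding reduced_walk_def by auto
  have idx: "(xs @ tl ys) ! k = (if k < ?n then xs ! k else ys ! (k - (?n - 1)))" for k
  proof (cases "k < ?n")
    case True then show ?thesis by (simp add: nth_append)
  next
    case False
    then have "(xs @ tl ys) ! k = tl ys ! (k - ?n)" by (simp add: nth_append)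
    also have "\<dots> = ys ! Suc (k - ?n)" using xn by (cases ys) auto
    also have "Suc (k - ?n) = k - (?n - 1)" using False xn by (cases xs) auto
    finally show ?thesis using False by simp
  qed
  have idx2: "?n - 1 \<le> k \<Longrightarrow> (xs @ tl ys) ! k = ys ! (k - (?n - 1))" for k
  proof (cases "k < ?n")
    case True
    assume "?n - 1 \<le> k"
    then have "k = ?n - 1" using True by auto
    then have "(xs @ tl ys) ! k = last xs" using True xn by (simp add: nth_append last_conv_nth)
    also have "\<dots> = ys ! 0" using m xn by (simp add: hd_conv_nth)
    finally show ?thesis using \<open>k = ?n - 1\<close> by simp
  qed (simp add: idx)
  have len: "length (xs @ tl ys) = ?n + length ys - 1" using xn by (cases ys) auto
  show ?thesis unfolding reduced_walk_def
  proof (intro conjI allI impI)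
    show "xs @ tl ys \<noteq> []" using xn by auto
  next
    fix i assume i: "Suc i < length (xs @ tl ys)"
    show "((xs @ tl ys) ! i, (xs @ tl ys) ! Suc i) \<in> E"
    proof (cases "Suc i < ?n")
      case True then show ?thesis using x idx by (simp add: reduced_walk_def)
    next
      case False
      then have "(xs @ tl ys) ! i = ys ! (i - (?n - 1))" "(xs @ tl ys) ! Suc i = ys ! Suc (i - (?n - 1))"
        using idx2[of i] idx2[of "Suc i"] xn False by (auto simp: Suc_diff_le)
      moreover have "Suc (i - (?n - 1)) < length ys" using i False len by auto
      ultimately show ?thesis using y by (simp add: reduced_walk_def)
    qed
  next
    fix i assume i: "Suc (Suc i) < length (xs @ tl ys)"
    show "(xs @ tl ys) ! i \<noteq> (xs @ tl ys) ! Suc (Suc i)"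
    proof (cases "Suc (Suc i) < ?n")
      case True then show ?thesis using x idx by (simp add: reduced_walk_def)
    next
      case False
      show ?thesis
      proof (cases "?n - 1 \<le> i")
        case True
        then have "(xs @ tl ys) ! i = ys ! (i - (?n - 1))" "(xs @ tl ys) ! Suc (Suc i) = ys ! Suc (Suc (i - (?n - 1)))"
          using idx2[of i] idx2[of "Suc (Suc i)"] xn True by (auto simp: Suc_diff_le)
        moreover have "Suc (Suc (i - (?n - 1))) < length ys" using i True len by auto
        ultimately show ?thesis using y by (simp add: reduced_walk_def)
      next
        case F2: False
        then have ii: "i = ?n - 2" "2 \<le> ?n" using False by auto
        have lt: "i < ?n" using ii by auto
        have "(xs @ tl ys) ! i = xs ! (?n - 2)" using idx[of i] lt ii(1) by (metis (full_types))
        moreover have "(xs @ tl ys) ! Suc (Suc i) = ys ! 1"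
        proof -
          have "Suc (Suc i) - (?n - 1) = 1" "?n - 1 \<le> Suc (Suc i)" using ii by auto
          then show ?thesis using idx2[of "Suc (Suc i)"] by metis
        qed
        moreover have "2 \<le> length ys" using i len ii by auto
        ultimately show ?thesis using nb2 ii by auto
      qed
    qed
  qed
qed

lemma rw_snoc: "reduced_walk E xs \<Longrightarrow> (last xs, v) \<in> E \<Longrightarrow> (2 \<le> length xs \<Longrightarrow> xs ! (length xs - 2) \<noteq> v)
   \<Longrightarrow> reduced_walk E (xs @ [v])"
  using rw_append[of xs "[last xs, v]"] unfolding reduced_walk_def
  by (auto simp: nth_Cons split: nat.splits)

definition walk :: "'v \<Rightarrow> 'v \<Rightarrow> 'v list" where
  "walk u v = (THE xs. reduced_walk E xs \<and> hd xs = u \<and> last xs = v)"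

lemma walk_ex1: "\<exists>!xs. reduced_walk E xs \<and> hd xs = u \<and> last xs = v"
  using tree unfolding is_tree_def by blast

lemma walk: "reduced_walk E (walk u v)" "hd (walk u v) = u" "last (walk u v) = v"
  using theI'[OF walk_ex1[of u v]] unfolding walk_def by auto

lemma walk_unique: "reduced_walk E xs \<Longrightarrow> hd xs = u \<Longrightarrow> last xs = v \<Longrightarrow> walk u v = xs"
  using walk walk_ex1 by blast

lemma walk_ne: "walk u v \<noteq> []" using walk(1) rwD(1) by blast

lemma walk_same: "walk u u = [u]"
  by (rule walk_unique) (auto simp: reduced_walk_def)

lemma walk_edge: "(u,v) \<in> E \<Longrightarrow> walk u v = [u,v]"
  by (rule walk_unique) (auto simp: reduced_walk_def nth_Cons split: nat.splits)

lemma walk_rev: "walk v u = rev (walk u v)"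
  by (rule walk_unique) (auto simp: rw_rev walk hd_rev last_rev)

lemma walk_len1: "length (walk u v) = 1 \<longleftrightarrow> u = v"
proof
  assume "length (walk u v) = 1"
  then obtain w where "walk u v = [w]" by (cases "walk u v") auto
  then show "u = v" using walk(2,3)[of u v] by auto
qed (simp add: walk_same)

lemma walk_hd0: "walk u v ! 0 = u" using walk(2) walk_ne by (simp add: hd_conv_nth)
lemma walk_last: "walk u v ! (length (walk u v) - 1) = v" using walk(3) walk_ne by (simp add: last_conv_nth)

lemma walk_edges: "Suc i < length (walk u v) \<Longrightarrow> (walk u v ! i, walk u v ! Suc i) \<in> E"
  using walk(1) rwD(2) by blast
lemma walk_nbt: "Suc (Suc i) < length (walk u v) \<Longrightarrow> walk u v ! i \<noteq> walk u v ! Suc (Suc i)"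
  using walk(1) rwD(3) by blast

lemma walk_take: "0 < n \<Longrightarrow> n \<le> length (walk u v) \<Longrightarrow> take n (walk u v) = walk u (walk u v ! (n - 1))"
  apply (rule sym, rule walk_unique)
  using walk_ne walk(1) rw_take walk_hd0
  by (auto simp: hd_conv_nth last_conv_nth min_def)

lemma walk_types: "i < length (walk u v) \<Longrightarrow> (walk u v ! i \<in> VX \<longleftrightarrow> (u \<in> VX \<longleftrightarrow> even i))"
proof (induction i)
  case 0 then show ?case using walk_hd0 by simp
next
  case (Suc i)
  then have "(walk u v ! i, walk u v ! Suc i) \<in> E" using walk_edges by auto
  then show ?case using Suc bip by auto
qed

end



context btree begin

definition iswalk :: "'v list \<Rightarrow> bool" where
  "iswalk xs \<longleftrightarrow> xs \<noteq> [] \<and> (\<forall>i. Suc i < length xs \<longrightarrow> (xs!i, xs!Suc i) \<in> E)"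

lemma iswalk_append:
  assumes x: "iswalk xs" and y: "iswalk ys" and m: "last xs = hd ys"
  shows "iswalk (xs @ tl ys)"
proof -
  let ?n = "length xs"
  have xn: "xs \<noteq> []" "ys \<noteq> []" using x y unfolding iswalk_def by auto
  have idx2: "?n - 1 \<le> k \<Longrightarrow> (xs @ tl ys) ! k = ys ! (k - (?n - 1))" for k
  proof (cases "k < ?n")
    case True
    assume "?n - 1 \<le> k"
    then have "k = ?n - 1" using True by auto
    then have "(xs @ tl ys) ! k = last xs" using True xn by (simp add: nth_append last_conv_nth)
    also have "\<dots> = ys ! 0" using m xn by (simp add: hd_conv_nth)
    finally show ?thesis using \<open>k = ?n - 1\<close> by simp
  next
    case False
    then have "(xs @ tl ys) ! k = tl ys ! (k - ?n)" by (simp add: nth_append)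
    also have "\<dots> = ys ! Suc (k - ?n)" using xn by (cases ys) auto
    also have "Suc (k - ?n) = k - (?n - 1)" using False xn by (cases xs) auto
    finally show ?thesis by simp
  qed
  have len: "length (xs @ tl ys) = ?n + length ys - 1" using xn by (cases ys) auto
  show ?thesis unfolding iswalk_def
  proof (intro conjI allI impI)
    show "xs @ tl ys \<noteq> []" using xn by auto
  next
    fix i assume i: "Suc i < length (xs @ tl ys)"
    show "((xs @ tl ys) ! i, (xs @ tl ys) ! Suc i) \<in> E"
    proof (cases "Suc i < ?n")
      case True then show ?thesis using x by (simp add: iswalk_def nth_append)
    next
      case False
      then have "(xs @ tl ys) ! i = ys ! (i - (?n - 1))" "(xs @ tl ys) ! Suc i = ys ! Suc (i - (?n - 1))"
        using idx2[of i] idx2[of "Suc i"] xn False by (auto simp: Suc_diff_le)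
      moreover have "Suc (i - (?n - 1)) < length ys" using i False len by auto
      ultimately show ?thesis using y by (simp add: iswalk_def)
    qed
  qed
qed

lemma rw_iswalk: "reduced_walk E xs \<Longrightarrow> iswalk xs"
  unfolding reduced_walk_def iswalk_def by auto

lemma walk_subset_aux:
  "\<forall>xs. length xs = n \<longrightarrow> iswalk xs \<longrightarrow> set (walk (hd xs) (last xs)) \<subseteq> set xs"
proof (induction n rule: less_induct)
  case (less n)
  show ?case
  proof (intro allI impI)
    fix xs :: "'v list" assume n: "length xs = n" and w: "iswalk xs"
    show "set (walk (hd xs) (last xs)) \<subseteq> set xs"
    proof (cases "reduced_walk E xs")
      case True then show ?thesis using walk_unique by simp
    next
      case False
      then obtain i where i: "Suc (Suc i) < length xs" "xs ! i = xs ! Suc (Suc i)"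
        using w unfolding iswalk_def reduced_walk_def by auto
      define ys where "ys = take (Suc i) xs @ drop (Suc (Suc (Suc i))) xs"
      have yidx: "ys ! k = (if k \<le> i then xs ! k else xs ! (k + 2))" if "k < length ys" for k
        using that i unfolding ys_def by (auto simp: nth_append min_def)
      have ylen: "length ys = length xs - 2" using i unfolding ys_def by auto
      have yset: "set ys \<subseteq> set xs" unfolding ys_def
        using set_take_subset set_drop_subset by (metis Un_subset_iff set_append)
      have yne: "ys \<noteq> []" unfolding ys_def using i by (cases xs) auto
      have yhd: "hd ys = hd xs" unfolding ys_def using i by (cases xs) auto
      have ylast: "last ys = last xs"
      proof (cases "Suc (Suc (Suc i)) < length xs")
        case True then show ?thesis unfolding ys_def by (simp add: last_append)
      next
        case False
        then have l3: "length xs = Suc (Suc (Suc i))" using i by auto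
        then have "last xs = xs ! Suc (Suc i)" by (metis diff_Suc_1 last_conv_nth list.size(3) nat.distinct(1))
        moreover have "ys = take (Suc i) xs" unfolding ys_def using l3 by auto
        moreover have "last (take (Suc i) xs) = xs ! i" using i
        proof -
          have "length (take (Suc i) xs) = Suc i" using i by auto
          then have "last (take (Suc i) xs) = take (Suc i) xs ! i"
            by (metis diff_Suc_1 last_conv_nth list.size(3) nat.distinct(1))
          then show ?thesis by simp
        qed
        ultimately show ?thesis using i by simp
      qed
      have yw: "iswalk ys" unfolding iswalk_def
      proof (intro conjI allI impI)
        show "ys \<noteq> []" by (rule yne)
        fix k assume k: "Suc k < length ys"
        show "(ys ! k, ys ! Suc k) \<in> E"
        proof (cases "Suc k \<le> i")
          case True then show ?thesis using yidx k w ylen unfolding iswalk_def by auto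
        next
          case False
          show ?thesis
          proof (cases "k = i")
            case True
            then have "ys ! k = xs ! Suc (Suc i)" "ys ! Suc k = xs ! Suc (Suc (Suc i))"
              using yidx k i by auto
            then show ?thesis using w k ylen True unfolding iswalk_def by auto
          next
            case F2: False
            then have "ys ! k = xs ! (k + 2)" "ys ! Suc k = xs ! Suc (k + 2)"
              using yidx k False by auto
            then show ?thesis using w k ylen unfolding iswalk_def by auto
          qed
        qed
      qed
      have "length ys < n" using ylen n i by auto
      then have "set (walk (hd ys) (last ys)) \<subseteq> set ys" using less yw by blast
      then show ?thesis using yhd ylast yset by auto
    qed
  qed
qed

lemma walk_subset: "iswalk xs \<Longrightarrow> set (walk (hd xs) (last xs)) \<subseteq> set xs"
  using walk_subset_aux by blast

lemma walk_tri: "set (walk y1 y3) \<subseteq> set (walk y1 y2) \<union> set (walk y2 y3)"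
proof -
  have "iswalk (walk y1 y2 @ tl (walk y2 y3))"
    by (rule iswalk_append) (auto simp: rw_iswalk walk)
  moreover have "hd (walk y1 y2 @ tl (walk y2 y3)) = y1" using walk walk_ne by auto
  moreover have "last (walk y1 y2 @ tl (walk y2 y3)) = y3"
  proof (cases "tl (walk y2 y3) = []")
    case True
    then have "walk y2 y3 = [hd (walk y2 y3)]" using walk_ne by (cases "walk y2 y3") auto
    then have "y2 = y3" using walk(2,3)[of y2 y3] by (metis last_ConsL)
    then show ?thesis using True walk by auto
  next
    case False
    then show ?thesis using walk(3)[of y2 y3] walk_ne by (simp add: last_tl)
  qed
  ultimately have "set (walk y1 y3) \<subseteq> set (walk y1 y2 @ tl (walk y2 y3))"
    using walk_subset by metis
  moreover have "set (tl (walk y2 y3)) \<subseteq> set (walk y2 y3)" by (cases "walk y2 y3") auto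
  ultimately show ?thesis by auto
qed

definition tw :: "'v \<Rightarrow> 'v \<Rightarrow> 'v" where "tw x y = walk x y ! 1"

lemma walk_len2: "u \<noteq> v \<Longrightarrow> 2 \<le> length (walk u v)"
proof -
  assume "u \<noteq> v"
  then have "length (walk u v) \<noteq> 1" "length (walk u v) \<noteq> 0" using walk_len1[of u v] walk_ne[of u v] by auto
  then show ?thesis by arith
qed

lemma tw_edge: "x \<noteq> y \<Longrightarrow> (x, tw x y) \<in> E"
proof -
  assume "x \<noteq> y"
  then have "Suc 0 < length (walk x y)" using walk_len2 by fastforce
  then show ?thesis using walk_edges[of 0 x y] walk_hd0 unfolding tw_def by auto
qed

lemma tw_notin:
  assumes "x \<noteq> y2" "x \<noteq> y3" "x \<notin> set (walk y2 y3)"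
  shows "tw x y2 = tw x y3"
proof (rule ccontr)
  assume ne: "tw x y2 \<noteq> tw x y3"
  let ?A = "rev (walk x y2)" and ?B = "walk x y3"
  have l2: "2 \<le> length (walk x y2)" "2 \<le> length (walk x y3)" using assms walk_len2 by auto
  have "reduced_walk E (?A @ tl ?B)"
  proof (rule rw_append)
    show "reduced_walk E ?A" using rw_rev walk by blast
    show "reduced_walk E ?B" using walk by blast
    show "last ?A = hd ?B" using walk walk_ne by (simp add: last_rev)
    have "?A ! (length ?A - 2) = walk x y2 ! 1" using l2 by (simp add: rev_nth)
    then show "?A ! (length ?A - 2) \<noteq> ?B ! 1" using ne unfolding tw_def by simp
  qed
  moreover have "hd (?A @ tl ?B) = y2" using walk walk_ne by (simp add: hd_rev)
  moreover have "last (?A @ tl ?B) = y3"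
    using walk(3)[of x y3] l2 by (cases "walk x y3") (auto simp: last_tl)
  ultimately have "walk y2 y3 = ?A @ tl ?B" using walk_unique by blast
  moreover have "x \<in> set ?A" using walk(2)[of x y2] walk_ne hd_in_set set_rev by metis
  ultimately show False using assms by auto
qed

lemma aut_inj: "g \<in> tree_aut E \<Longrightarrow> inj g" unfolding tree_aut_def bij_def by auto
lemma aut_E: "g \<in> tree_aut E \<Longrightarrow> (u,w) \<in> E \<Longrightarrow> (g u, g w) \<in> E" unfolding tree_aut_def by auto

lemma aut_walk: assumes g: "g \<in> tree_aut E" shows "walk (g u) (g v) = map g (walk u v)"
proof (rule walk_unique)
  show "reduced_walk E (map g (walk u v))"
    using walk(1)[of u v] aut_E[OF g] aut_inj[OF g] unfolding reduced_walk_def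
    by (auto simp: inj_eq)
  show "hd (map g (walk u v)) = g u" using walk walk_ne by (simp add: hd_map)
  show "last (map g (walk u v)) = g v" using walk walk_ne by (simp add: last_map)
qed

lemma aut_tw: "g \<in> tree_aut E \<Longrightarrow> x \<noteq> y \<Longrightarrow> tw (g x) (g y) = g (tw x y)"
proof -
  assume "g \<in> tree_aut E" "x \<noteq> y"
  then have "1 < length (walk x y)" using walk_len2 by fastforce
  then show ?thesis using aut_walk[OF \<open>g \<in> tree_aut E\<close>] unfolding tw_def by auto
qed

end



fun lift :: "('v \<Rightarrow> 'v \<Rightarrow> 'v \<Rightarrow> 'v) \<Rightarrow> 'v \<Rightarrow> 'v list \<Rightarrow> 'v" where
  "lift f w (u # v # rest) = lift f (f w u v) (v # rest)"
| "lift f w _ = w"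

lemma lift_snoc: "lift f w (xs @ [a, b]) = f (lift f w (xs @ [a])) a b"
proof (induction xs arbitrary: w)
  case Nil then show ?case by simp
next
  case (Cons x xs)
  show ?case
  proof (cases xs)
    case Nil then show ?thesis by simp
  next
    case (Cons y ys)
    then show ?thesis using Cons.IH by simp
  qed
qed

context btree begin

definition par :: "'v \<Rightarrow> 'v \<Rightarrow> 'v" where
  "par r v = walk r v ! (length (walk r v) - 2)"

lemma par_walk: assumes "v \<noteq> r" shows "walk r v = walk r (par r v) @ [v]"
proof -
  let ?W = "walk r v" let ?n = "length ?W"
  have n2: "2 \<le> ?n" using walk_len2 assms by auto
  have "take (?n - 1) ?W = walk r (?W ! (?n - 1 - 1))" using walk_take[of "?n - 1" r v] n2 by auto
  moreover have "?n - 1 - 1 = ?n - 2" by arith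
  ultimately have t: "take (?n - 1) ?W = walk r (par r v)" unfolding par_def by simp
  have "?W = take (?n - 1) ?W @ [last ?W]" using walk_ne
    by (metis append_butlast_last_id butlast_conv_take)
  then show ?thesis using t walk(3) by metis
qed

lemma par_len: "v \<noteq> r \<Longrightarrow> length (walk r (par r v)) < length (walk r v)"
  using par_walk by (metis length_append_singleton lessI)

lemma par_edge: assumes "v \<noteq> r" shows "(par r v, v) \<in> E"
proof -
  let ?W = "walk r v" let ?n = "length ?W"
  have n2: "2 \<le> ?n" using walk_len2 assms by auto
  have "(?W ! (?n - 2), ?W ! Suc (?n - 2)) \<in> E" using walk_edges[of "?n - 2" r v] n2 by auto
  moreover have "Suc (?n - 2) = ?n - 1" using n2 by arith
  ultimately show ?thesis using walk_last unfolding par_def by metis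
qed

lemma par_of_edge_root: "(r,v) \<in> E \<Longrightarrow> v \<noteq> r \<and> par r v = r"
  using walk_edge noloop unfolding par_def by auto

lemma edge_par: assumes e: "(u,v) \<in> E"
  shows "(v \<noteq> r \<and> par r v = u) \<or> (u \<noteq> r \<and> par r u = v)"
proof (cases "u = r")
  case True then show ?thesis using par_of_edge_root e by auto
next
  case False
  let ?W = "walk r u"
  have n2: "2 \<le> length ?W" using walk_len2 False by auto
  show ?thesis
  proof (cases "?W ! (length ?W - 2) = v")
    case True then show ?thesis using False unfolding par_def by auto
  next
    case ne: False
    have "reduced_walk E (?W @ [v])" using rw_snoc[of ?W v] walk e ne by auto
    then have wv: "walk r v = ?W @ [v]" using walk walk_unique walk_ne
      by (metis append_is_Nil_conv hd_append2 last_snoc)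
    have "v \<noteq> r"
    proof
      assume "v = r"
      then have "length (walk r v) = 1" using walk_same by simp
      then show False using wv n2 by simp
    qed
    moreover have "par r v = u" using wv walk(3)[of r u] walk_ne unfolding par_def
      by (simp add: last_conv_nth nth_append)
    ultimately show ?thesis by auto
  qed
qed

lemma depth_induct:
  assumes "\<And>v. (\<And>w. length (walk r w) < length (walk r v) \<Longrightarrow> P w) \<Longrightarrow> P v"
  shows "P v"
proof -
  have "\<forall>v. length (walk r v) = n \<longrightarrow> P v" for n
    by (induction n rule: less_induct) (use assms in blast)
  then show ?thesis by blast
qed

lemma cs_same: "(u \<in> VX \<longleftrightarrow> w \<in> VX) \<Longrightarrow> cs u = cs w" unfolding cs_def by auto

lemma the_inv_arc: "a \<in> cs v \<Longrightarrow> the_inv_into (arcs_from E v) c a = (v, nb v a)"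
  apply (rule the_inv_into_f_eq)
  using col_bij[of v] nb[of a v] unfolding bij_betw_def arcs_from_def by auto

end

locale gcons = btree E VX VY X Y c
  for E :: "('v \<times> 'v) set" and VX VY :: "'v set" and X Y :: "'a set" and c :: "'v \<times> 'v \<Rightarrow> 'a" +
  fixes r r' :: 'v and \<pi> :: "'v \<Rightarrow> 'a \<Rightarrow> 'a"
  assumes A1: "r \<in> VX \<longleftrightarrow> r' \<in> VX"
    and A2: "\<And>v. bij_betw (\<pi> v) (cs v) (cs v)"
    and A3: "\<And>v. v \<noteq> r \<Longrightarrow> par r v \<noteq> r \<Longrightarrow> \<pi> v (kap (par r v)) = \<pi> (par r (par r v)) (kap (par r v))"
    and A4: "\<And>v. v \<noteq> r \<Longrightarrow> par r v = r \<Longrightarrow> \<pi> v (kap r) = kap r'"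
begin

definition g :: "'v \<Rightarrow> 'v" where
  "g v = lift (\<lambda>w u v. nb w (\<pi> u (c (u,v)))) r' (walk r v)"

lemma g_root: "g r = r'" unfolding g_def walk_same by simp

lemma g_rec: assumes "v \<noteq> r" shows "g v = nb (g (par r v)) (\<pi> (par r v) (c (par r v, v)))"
proof -
  obtain ys where ys: "walk r (par r v) = ys @ [par r v]"
    using walk(3) walk_ne by (metis append_butlast_last_id)
  have "walk r v = ys @ [par r v, v]" using par_walk[OF assms] ys by simp
  then have "g v = lift (\<lambda>w u v. nb w (\<pi> u (c (u,v)))) r' (ys @ [par r v, v])" unfolding g_def by simp
  also have "\<dots> = nb (lift (\<lambda>w u v. nb w (\<pi> u (c (u,v)))) r' (ys @ [par r v])) (\<pi> (par r v) (c (par r v, v)))"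
    by (rule lift_snoc)
  also have "lift (\<lambda>w u v. nb w (\<pi> u (c (u,v)))) r' (ys @ [par r v]) = g (par r v)"
    unfolding g_def using ys by simp
  finally show ?thesis .
qed

lemma pi_in: "a \<in> cs v \<Longrightarrow> \<pi> v a \<in> cs v" using A2 bij_betwE by blast

lemma g_type: "g v \<in> VX \<longleftrightarrow> v \<in> VX"
proof (induction v rule: depth_induct[where r = r])
  case (1 v)
  show ?case
  proof (cases "v = r")
    case True then show ?thesis using g_root A1 by simp
  next
    case False
    let ?p = "par r v"
    have IH: "g ?p \<in> VX \<longleftrightarrow> ?p \<in> VX" using 1 par_len[OF False] by blast
    have e: "(?p, v) \<in> E" using par_edge[OF False] .
    have "\<pi> ?p (c (?p, v)) \<in> cs (g ?p)" using pi_in c_in[OF e] cs_same[OF IH] by simp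
    then have "(g ?p, g v) \<in> E" using g_rec[OF False] nb by simp
    then show ?thesis using bip e IH by blast
  qed
qed

lemma g_par: assumes "v \<noteq> r"
  shows "(g (par r v), g v) \<in> E \<and> c (g (par r v), g v) = \<pi> (par r v) (c (par r v, v))"
proof -
  let ?p = "par r v"
  have e: "(?p, v) \<in> E" using par_edge[OF assms] .
  have "\<pi> ?p (c (?p, v)) \<in> cs (g ?p)" using pi_in c_in[OF e] cs_same[OF g_type[of ?p]] by simp
  then show ?thesis using g_rec[OF assms] nb by simp
qed

lemma g_edge: assumes e: "(u,v) \<in> E"
  shows "(g u, g v) \<in> E \<and> c (g u, g v) = \<pi> u (c (u,v))"
  using edge_par[OF e, of r]
proof
  assume "v \<noteq> r \<and> par r v = u" then show ?thesis using g_par by auto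
next
  assume h: "u \<noteq> r \<and> par r u = v"
  then have e1: "(g v, g u) \<in> E" using g_par by auto
  then have e2: "(g u, g v) \<in> E" using symE by auto
  have "c (g u, g v) = kap (g v)" using kap e2 by auto
  moreover have "c (u, v) = kap v" using kap e by auto
  moreover have "\<pi> u (kap v) = kap (g v)"
  proof (cases "v = r")
    case True then show ?thesis using A4 h g_root by auto
  next
    case False
    have "\<pi> u (kap v) = \<pi> (par r v) (kap v)" using A3 h False by auto
    moreover have "kap v = c (par r v, v)" using kap par_edge[OF False] by auto
    moreover have "\<pi> (par r v) (c (par r v, v)) = c (g (par r v), g v)" using g_par[OF False] by auto
    moreover have "c (g (par r v), g v) = kap (g v)" using kap g_par[OF False] by auto
    ultimately show ?thesis by simp
  qed
  ultimately show ?thesis using e2 by simp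
qed

lemma pi_inj: "a \<in> cs v \<Longrightarrow> b \<in> cs v \<Longrightarrow> \<pi> v a = \<pi> v b \<Longrightarrow> a = b"
  using A2[of v] unfolding bij_betw_def inj_on_def by auto

lemma g_inj: "inj g"
proof (rule injI)
  fix u v assume guv: "g u = g v"
  have "reduced_walk E (map g (walk u v))" unfolding reduced_walk_def
  proof (intro conjI allI impI)
    show "map g (walk u v) \<noteq> []" using walk_ne by simp
  next
    fix i assume "Suc i < length (map g (walk u v))"
    then show "(map g (walk u v) ! i, map g (walk u v) ! Suc i) \<in> E"
      using walk_edges g_edge by auto
  next
    fix i assume i: "Suc (Suc i) < length (map g (walk u v))"
    let ?W = "walk u v"
    have e1: "(?W ! Suc i, ?W ! i) \<in> E" and e2: "(?W ! Suc i, ?W ! Suc (Suc i)) \<in> E"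
      using walk_edges[of i u v] walk_edges[of "Suc i" u v] i symE by auto
    have "c (?W ! Suc i, ?W ! i) \<noteq> c (?W ! Suc i, ?W ! Suc (Suc i))"
      using c_inj[OF e1 e2] walk_nbt[of i u v] i by auto
    then have "\<pi> (?W ! Suc i) (c (?W ! Suc i, ?W ! i)) \<noteq> \<pi> (?W ! Suc i) (c (?W ! Suc i, ?W ! Suc (Suc i)))"
      using pi_inj c_in e1 e2 by metis
    then have "c (g (?W ! Suc i), g (?W ! i)) \<noteq> c (g (?W ! Suc i), g (?W ! Suc (Suc i)))"
      using g_edge[OF e1] g_edge[OF e2] by simp
    then show "map g ?W ! i \<noteq> map g ?W ! Suc (Suc i)" using i by auto
  qed
  then have "walk (g u) (g v) = map g (walk u v)" using walk walk_unique walk_ne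
    by (metis hd_map last_map)
  then have "length (walk u v) = 1" using guv walk_same by (metis length_map list.size(3,4) zero_eq_add_iff_both_eq_0 One_nat_def add_0)
  then show "u = v" using walk_len1 by auto
qed

lemma g_locsurj: assumes e: "(g u, w') \<in> E" shows "\<exists>v. (u,v) \<in> E \<and> g v = w'"
proof -
  have "c (g u, w') \<in> cs u" using c_in[OF e] cs_same[OF g_type[of u]] by simp
  then obtain a where a: "a \<in> cs u" "\<pi> u a = c (g u, w')" using A2[of u] unfolding bij_betw_def by (metis imageE)
  let ?v = "nb u a"
  have ev: "(u, ?v) \<in> E" "c (u, ?v) = a" using nb a by auto
  then have "(g u, g ?v) \<in> E" "c (g u, g ?v) = c (g u, w')" using g_edge a by auto
  then have "g ?v = w'" using c_inj e by auto
  then show ?thesis using ev by auto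
qed

lemma g_surj: "surj g"
proof -
  have "\<exists>v. g v = w'" for w'
  proof (induction w' rule: depth_induct[where r = r'])
    case (1 w')
    show ?case
    proof (cases "w' = r'")
      case True then show ?thesis using g_root by auto
    next
      case False
      obtain v0 where v0: "g v0 = par r' w'" using 1 par_len[OF False] by blast
      have "(g v0, w') \<in> E" using v0 par_edge[OF False] by simp
      then show ?thesis using g_locsurj by blast
    qed
  qed
  then show ?thesis by (metis surjI)
qed

lemma g_aut: "g \<in> tree_aut E"
  unfolding tree_aut_def
proof (intro CollectI conjI allI)
  show "bij g" using g_inj g_surj by (simp add: bij_def)
  fix u w show "(u, w) \<in> E \<longleftrightarrow> (g u, g w) \<in> E"
  proof
    assume "(u,w) \<in> E" then show "(g u, g w) \<in> E" using g_edge by auto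
  next
    assume "(g u, g w) \<in> E"
    then obtain v where "(u,v) \<in> E" "g v = g w" using g_locsurj by blast
    then show "(u,w) \<in> E" using g_inj by (metis injD)
  qed
qed

lemma g_VX: "g ` VX = VX"
proof
  show "g ` VX \<subseteq> VX" using g_type by auto
  show "VX \<subseteq> g ` VX"
  proof
    fix x assume "x \<in> VX"
    obtain v where "g v = x" using g_surj by (metis surjD)
    then show "x \<in> g ` VX" using g_type \<open>x \<in> VX\<close> by auto
  qed
qed

lemma g_local: "a \<in> cs v \<Longrightarrow> local_action E c g v a = \<pi> v a"
  unfolding local_action_def Let_def using the_inv_arc[of a v] nb[of a v] g_edge by auto

lemma g_Uc:
  assumes "\<And>v. v \<in> VX \<Longrightarrow> \<exists>m\<in>M. \<forall>a\<in>X. m a = \<pi> v a"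
    and "\<And>v. v \<in> VY \<Longrightarrow> \<exists>m\<in>N. \<forall>a\<in>Y. m a = \<pi> v a"
  shows "g \<in> U_c E VX VY X Y c M N"
  unfolding U_c_def in_group_on_def
proof (intro CollectI conjI ballI)
  show "g \<in> tree_aut E" by (rule g_aut)
  show "g ` VX = VX" by (rule g_VX)
next
  fix v assume v: "v \<in> VX"
  then show "\<exists>m\<in>M. \<forall>x\<in>X. m x = local_action E c g v x"
    using assms(1)[OF v] g_local cs_X[OF v] by auto
next
  fix v assume v: "v \<in> VY"
  then show "\<exists>m\<in>N. \<forall>x\<in>Y. m x = local_action E c g v x"
    using assms(2)[OF v] g_local cs_Y VY_iff by auto
qed

end



context btree begin

lemma kap_X: "v \<in> VY \<Longrightarrow> kap v \<in> X"
  using has_nb[of v] kap_in bip cs_X VY_iff by metis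
lemma kap_Y: "v \<in> VX \<Longrightarrow> kap v \<in> Y"
  using has_nb[of v] kap_in bip cs_Y by metis

lemma nb_X: "x \<in> VX \<Longrightarrow> a \<in> X \<Longrightarrow> (x, nb x a) \<in> E \<and> nb x a \<in> VY \<and> kap (nb x a) = a"
  using nb[of a x] cs_X bip VY_iff kap by metis
lemma nb_Y: "y \<in> VY \<Longrightarrow> a \<in> Y \<Longrightarrow> (y, nb y a) \<in> E \<and> nb y a \<in> VX \<and> kap (nb y a) = a"
  using nb[of a y] cs_Y bip VY_iff kap by metis

lemma ex_VX: "\<exists>x. x \<in> VX"
proof -
  obtain w v :: 'v where "(w,v) \<in> E" using has_nb by blast
  then show ?thesis using bip by blast
qed

lemma ex_VY: "\<exists>x. x \<in> VY"
  using ex_VX nb_X X2 by blast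

lemma tw_par: "v \<noteq> r \<Longrightarrow> par r v \<noteq> r \<Longrightarrow> tw r v = tw r (par r v)"
proof -
  assume a: "v \<noteq> r" "par r v \<noteq> r"
  have "1 < length (walk r (par r v))" using walk_len2[of r "par r v"] a by auto
  then show ?thesis using par_walk[OF a(1)] unfolding tw_def by (simp add: nth_append)
qed

lemma tw_par_root: "v \<noteq> r \<Longrightarrow> par r v = r \<Longrightarrow> tw r v = v"
  using par_walk[of v r] walk_same unfolding tw_def by auto

lemma tw_edge_eq: "(r,v) \<in> E \<Longrightarrow> tw r v = v"
  using walk_edge unfolding tw_def by auto

end

locale bpg = btree E VX VY X Y c
  for E :: "('v \<times> 'v) set" and VX VY :: "'v set" and X Y :: "'a set" and c :: "'v \<times> 'v \<Rightarrow> 'a" +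
  fixes M N :: "('a \<Rightarrow> 'a) set"
  assumes pM: "perm_group_on X M" and pN: "perm_group_on Y N"
begin

lemma M_perm: "m \<in> M \<Longrightarrow> m permutes X" using pM unfolding perm_group_on_def by auto
lemma N_perm: "m \<in> N \<Longrightarrow> m permutes Y" using pN unfolding perm_group_on_def by auto
lemma M_id: "id \<in> M" using pM unfolding perm_group_on_def by auto
lemma N_id: "id \<in> N" using pN unfolding perm_group_on_def by auto
lemma M_comp: "m \<in> M \<Longrightarrow> m' \<in> M \<Longrightarrow> m \<circ> m' \<in> M" using pM unfolding perm_group_on_def by auto
lemma M_inv: "m \<in> M \<Longrightarrow> inv m \<in> M" using pM unfolding perm_group_on_def by auto
lemma N_comp: "m \<in> N \<Longrightarrow> m' \<in> N \<Longrightarrow> m \<circ> m' \<in> N" using pN unfolding perm_group_on_def by auto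
lemma N_inv: "m \<in> N \<Longrightarrow> inv m \<in> N" using pN unfolding perm_group_on_def by auto

lemma M_bij: "m \<in> M \<Longrightarrow> bij_betw m X X" by (rule permutes_imp_bij[OF M_perm])
lemma N_bij: "m \<in> N \<Longrightarrow> bij_betw m Y Y" by (rule permutes_imp_bij[OF N_perm])
lemma M_out: "m \<in> M \<Longrightarrow> a \<notin> X \<Longrightarrow> m a = a" by (rule permutes_not_in[OF M_perm])
lemma N_out: "m \<in> N \<Longrightarrow> a \<notin> Y \<Longrightarrow> m a = a" by (rule permutes_not_in[OF N_perm])
lemma M_Y: "m \<in> M \<Longrightarrow> a \<in> Y \<Longrightarrow> m a = a" using M_out XY by blast
lemma N_X: "m \<in> N \<Longrightarrow> a \<in> X \<Longrightarrow> m a = a" using N_out XY by blast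
lemma M_in: "m \<in> M \<Longrightarrow> a \<in> X \<Longrightarrow> m a \<in> X" using M_bij bij_betwE by blast
lemma N_in: "m \<in> N \<Longrightarrow> a \<in> Y \<Longrightarrow> m a \<in> Y" using N_bij bij_betwE by blast
lemma M_inv_app: "m \<in> M \<Longrightarrow> inv m (m a) = a" by (rule permutes_inverses(2)[OF M_perm])
lemma M_app_inv: "m \<in> M \<Longrightarrow> m (inv m a) = a" by (rule permutes_inverses(1)[OF M_perm])
lemma M_inj: "m \<in> M \<Longrightarrow> m a = m b \<Longrightarrow> a = b" using M_inv_app by metis
lemma N_inj: "m \<in> N \<Longrightarrow> m a = m b \<Longrightarrow> a = b" using permutes_inverses(2)[OF N_perm] by metis

abbreviation "UU \<equiv> U_c E VX VY X Y c M N"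

lemma U_aut: "g \<in> UU \<Longrightarrow> g \<in> tree_aut E" unfolding U_c_def by auto
lemma U_type: "g \<in> UU \<Longrightarrow> g v \<in> VX \<longleftrightarrow> v \<in> VX"
proof -
  assume g: "g \<in> UU"
  then have "g ` VX = VX" "inj g" unfolding U_c_def using aut_inj by auto
  then show ?thesis by (metis image_eqI inj_image_mem_iff)
qed
lemma U_VY: "g \<in> UU \<Longrightarrow> g v \<in> VY \<longleftrightarrow> v \<in> VY" using U_type VY_iff by auto

lemma U_locX: assumes g: "g \<in> UU" and x: "x \<in> VX"
  shows "\<exists>m\<in>M. \<forall>w. (x,w) \<in> E \<longrightarrow> kap (g w) = m (kap w)"
proof -
  obtain m where m: "m \<in> M" "\<forall>a\<in>X. m a = local_action E c g x a"
    using g x unfolding U_c_def in_group_on_def by auto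
  have "kap (g w) = m (kap w)" if e: "(x,w) \<in> E" for w
  proof -
    have cX: "c (x,w) \<in> X" using c_in[OF e] cs_X[OF x] by simp
    have "local_action E c g x (c (x,w)) = c (g x, g w)"
      unfolding local_action_def Let_def using the_inv_arc[OF c_in[OF e]] nb_eq[OF e] by simp
    moreover have "(g x, g w) \<in> E" using aut_E[OF U_aut[OF g] e] .
    ultimately show ?thesis using m cX kap e by metis
  qed
  then show ?thesis using m by blast
qed

lemma U_locY: assumes g: "g \<in> UU" and x: "x \<in> VY"
  shows "\<exists>m\<in>N. \<forall>w. (x,w) \<in> E \<longrightarrow> kap (g w) = m (kap w)"
proof -
  obtain m where m: "m \<in> N" "\<forall>a\<in>Y. m a = local_action E c g x a"
    using g x unfolding U_c_def in_group_on_def by auto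
  have "kap (g w) = m (kap w)" if e: "(x,w) \<in> E" for w
  proof -
    have cX: "c (x,w) \<in> Y" using c_in[OF e] cs_Y x VY_iff by simp
    have "local_action E c g x (c (x,w)) = c (g x, g w)"
      unfolding local_action_def Let_def using the_inv_arc[OF c_in[OF e]] nb_eq[OF e] by simp
    moreover have "(g x, g w) \<in> E" using aut_E[OF U_aut[OF g] e] .
    ultimately show ?thesis using m cX kap e by metis
  qed
  then show ?thesis using m by blast
qed

lemma uniform:
  assumes s: "\<sigma> \<in> M" and t: "\<tau> \<in> N" and rr: "r \<in> VX \<longleftrightarrow> r' \<in> VX"
    and k: "\<sigma> (\<tau> (kap r)) = kap r'"
  shows "\<exists>g\<in>UU. g r = r' \<and> (\<forall>u v. (u,v) \<in> E \<longrightarrow> (g u, g v) \<in> E \<and> c (g u, g v) = \<sigma> (\<tau> (c (u,v))))"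
proof -
  let ?\<phi> = "\<sigma> \<circ> \<tau>"
  have bX: "bij_betw ?\<phi> X X"
  proof -
    have "bij_betw \<tau> X X" using N_X[OF t] by (simp add: bij_betw_def inj_on_def image_def)
    then show ?thesis using M_bij[OF s] bij_betw_trans by blast
  qed
  have bY: "bij_betw ?\<phi> Y Y"
  proof -
    have "bij_betw \<sigma> Y Y" using M_Y[OF s] by (simp add: bij_betw_def inj_on_def image_def)
    then show ?thesis using N_bij[OF t] bij_betw_trans by blast
  qed
  interpret G: gcons E VX VY X Y c r r' "\<lambda>v. ?\<phi>"
    apply unfold_locales
    using rr bX bY k unfolding cs_def by auto
  have "G.g \<in> UU"
  proof (rule G.g_Uc)
    show "\<exists>m\<in>M. \<forall>a\<in>X. m a = ?\<phi> a" for v using s N_X[OF t] by auto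
    show "\<exists>m\<in>N. \<forall>a\<in>Y. m a = ?\<phi> a" for v using t M_Y[OF s] N_in[OF t] by auto
  qed
  then show ?thesis using G.g_root G.g_edge by auto
qed

lemma branchfix:
  assumes x: "x \<in> VX" and u: "(x,u) \<in> E" and s: "\<sigma> \<in> M" and su: "\<sigma> (kap u) = kap u"
  shows "\<exists>g\<in>UU. g x = x \<and> (\<forall>v. tw x v = u \<longrightarrow> g v = v) \<and>
           (\<forall>w. (x,w) \<in> E \<longrightarrow> (x, g w) \<in> E \<and> c (x, g w) = \<sigma> (c (x,w)))"
proof -
  define \<pi> where "\<pi> v = (if v \<noteq> x \<and> tw x v = u then id else \<sigma>)" for v
  have bX: "bij_betw \<sigma> X X" using M_bij[OF s] .
  have bY: "bij_betw \<sigma> Y Y" using M_Y[OF s] by (simp add: bij_betw_def inj_on_def image_def)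
  interpret G: gcons E VX VY X Y c x x \<pi>
  proof (unfold_locales)
    show "x \<in> VX \<longleftrightarrow> x \<in> VX" by simp
    show "bij_betw (\<pi> v) (cs v) (cs v)" for v using bX bY unfolding cs_def \<pi>_def by auto
    show "\<pi> v (kap x) = kap x" for v using M_Y[OF s] kap_Y[OF x] unfolding \<pi>_def by auto
  next
    fix v assume v: "v \<noteq> x" "par x v \<noteq> x"
    let ?p = "par x v"
    have tv: "tw x v = tw x ?p" using tw_par v by auto
    show "\<pi> v (kap ?p) = \<pi> (par x ?p) (kap ?p)"
    proof (cases "par x ?p = x")
      case True
      then have "tw x ?p = ?p" using tw_par_root v by auto
      then show ?thesis using True tv su unfolding \<pi>_def by auto
    next
      case False
      then have "tw x ?p = tw x (par x ?p)" using tw_par v by auto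
      then show ?thesis using tv v False unfolding \<pi>_def by auto
    qed
  qed
  have "G.g \<in> UU"
  proof (rule G.g_Uc)
    show "\<exists>m\<in>M. \<forall>a\<in>X. m a = \<pi> v a" for v
    proof (cases "v \<noteq> x \<and> tw x v = u")
      case True then show ?thesis using M_id unfolding \<pi>_def by (intro bexI[of _ id]) auto
    next
      case False then show ?thesis using s unfolding \<pi>_def by (intro bexI[of _ \<sigma>]) auto
    qed
    show "\<exists>m\<in>N. \<forall>a\<in>Y. m a = \<pi> v a" for v using N_id M_Y[OF s] unfolding \<pi>_def by (intro bexI[of _ id]) auto
  qed
  moreover have "G.g v = v" if "tw x v = u" for v
    using that
  proof (induction v rule: depth_induct[where r = x])
    case (1 v)
    show ?case
    proof (cases "v = x")
      case True then show ?thesis using G.g_root by simp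
    next
      case vx: False
      let ?p = "par x v"
      have ep: "(?p, v) \<in> E" using par_edge[OF vx] .
      show ?thesis
      proof (cases "?p = x")
        case True
        then have "v = u" using tw_par_root vx 1(2) by auto
        then have "\<pi> ?p (c (?p, v)) = c (?p, v)" using True su kap u unfolding \<pi>_def by auto
        then show ?thesis using G.g_rec[OF vx] True G.g_root nb_eq[OF ep] by simp
      next
        case False
        then have "tw x ?p = u" using tw_par vx 1(2) by auto
        then have "G.g ?p = ?p" using 1(1) par_len[OF vx] by blast
        moreover have "\<pi> ?p = id" using False \<open>tw x ?p = u\<close> unfolding \<pi>_def by auto
        ultimately show ?thesis using G.g_rec[OF vx] nb_eq[OF ep] by simp
      qed
    qed
  qed
  moreover have "(x, G.g w) \<in> E \<and> c (x, G.g w) = \<sigma> (c (x,w))" if "(x,w) \<in> E" for w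
    using G.g_edge[OF that] G.g_root unfolding \<pi>_def by auto
  ultimately show ?thesis using G.g_root by blast
qed

lemma box_trans: "transitive_on (box_product E VX VY X Y c M N) VY \<longleftrightarrow> (\<forall>y1\<in>VY. \<forall>y2\<in>VY. \<exists>g\<in>UU. g y1 = y2)"
  unfolding transitive_on_def box_product_def by auto

lemma box_pres: assumes "R \<subseteq> VY \<times> VY"
  shows "preserves_rel (box_product E VX VY X Y c M N) R \<longleftrightarrow> (\<forall>g\<in>UU. \<forall>(a,b)\<in>R. (g a, g b) \<in> R)"
  using assms unfolding preserves_rel_def box_product_def by fastforce

lemma part1: "transitive_on (box_product E VX VY X Y c M N) VY \<longleftrightarrow> transitive_on M X"
  unfolding box_trans
proof
  assume h: "\<forall>y1\<in>VY. \<forall>y2\<in>VY. \<exists>g\<in>UU. g y1 = y2"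
  show "transitive_on M X" unfolding transitive_on_def
  proof (intro ballI)
    fix a b assume ab: "a \<in> X" "b \<in> X"
    obtain x where x: "x \<in> VX" using ex_VX by blast
    obtain g where g: "g \<in> UU" "g (nb x a) = nb x b" using h nb_X[OF x] ab by meson
    obtain m where m: "m \<in> M" "\<forall>w. (x,w) \<in> E \<longrightarrow> kap (g w) = m (kap w)" using U_locX[OF g(1) x] by blast
    show "\<exists>m\<in>M. m a = b" using m g nb_X[OF x] ab by metis
  qed
next
  assume h: "transitive_on M X"
  show "\<forall>y1\<in>VY. \<forall>y2\<in>VY. \<exists>g\<in>UU. g y1 = y2"
  proof (intro ballI)
    fix y1 y2 assume y: "y1 \<in> VY" "y2 \<in> VY"
    obtain \<sigma> where s: "\<sigma> \<in> M" "\<sigma> (kap y1) = kap y2" using h kap_X y unfolding transitive_on_def by blast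
    have "\<sigma> (id (kap y1)) = kap y2" "y1 \<in> VX \<longleftrightarrow> y2 \<in> VX" using s y VY_iff by auto
    then show "\<exists>g\<in>UU. g y1 = y2" using uniform[OF s(1) N_id] by blast
  qed
qed

end



context bpg begin

lemma nbVY: "x \<in> VX \<Longrightarrow> (x,y) \<in> E \<Longrightarrow> y \<in> VY" using bip VY_iff by blast
lemma nbVX: "x \<in> VY \<Longrightarrow> (x,y) \<in> E \<Longrightarrow> y \<in> VX" using bip VY_iff by blast

definition QT :: "('v \<Rightarrow> ('v \<times> 'v) set) \<Rightarrow> ('v \<times> 'v) set" where
  "QT T = {(y,y'). y \<in> VY \<and> y' \<in> VY \<and> (\<forall>x\<in>set (walk y y'). x \<in> VX \<longrightarrow> (tw x y, tw x y') \<in> T x)}"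

lemma walk3: assumes "(x,y) \<in> E" "(x,y') \<in> E" "y \<noteq> y'" shows "walk y y' = [y,x,y']"
  by (rule walk_unique) (use assms symE in \<open>auto simp: reduced_walk_def nth_Cons split: nat.splits\<close>)

lemma QT_dist2:
  assumes "x \<in> VX" "(x,y) \<in> E" "(x,y') \<in> E" "y \<noteq> y'"
  shows "(y,y') \<in> QT T \<longleftrightarrow> (y,y') \<in> T x"
proof -
  have w: "walk y y' = [y,x,y']" using walk3 assms by auto
  have "y \<notin> VX" "y' \<notin> VX" using bip assms(1,2,3) by blast+
  then have yY: "y \<in> VY" "y' \<in> VY" using VY_iff by auto
  have t: "tw x y = y" "tw x y' = y'" using tw_edge_eq assms by auto
  have "(\<forall>z\<in>set (walk y y'). z \<in> VX \<longrightarrow> (tw z y, tw z y') \<in> T z) \<longleftrightarrow> (tw x y, tw x y') \<in> T x"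
  proof -
    have "y \<notin> VX" "y' \<notin> VX" using yY VY_iff by auto
    then show ?thesis unfolding w using assms(1) by simp
  qed
  then show ?thesis unfolding QT_def using yY t by auto
qed

lemma QT_equiv:
  assumes Trefl: "\<And>x a. x \<in> VX \<Longrightarrow> (x,a) \<in> E \<Longrightarrow> (a,a) \<in> T x"
    and Tsym: "\<And>x a b. (a,b) \<in> T x \<Longrightarrow> (b,a) \<in> T x"
    and Ttrans: "\<And>x a b d. (a,b) \<in> T x \<Longrightarrow> (b,d) \<in> T x \<Longrightarrow> (a,d) \<in> T x"
  shows "equiv VY (QT T)"
proof (rule equivI)
  show "refl_on VY (QT T)" unfolding refl_on_def QT_def using walk_same VY_iff by auto
  have ws: "set (walk b a) = set (walk a b)" for a b using walk_rev[of b a] by simp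
  show "sym (QT T)" unfolding sym_def QT_def using ws Tsym by auto
  show "QT T \<subseteq> VY \<times> VY" unfolding QT_def by auto
  show "trans (QT T)" unfolding trans_def
  proof (intro allI impI)
    fix y1 y2 y3 assume h: "(y1,y2) \<in> QT T" "(y2,y3) \<in> QT T"
    then have y: "y1 \<in> VY" "y2 \<in> VY" "y3 \<in> VY" unfolding QT_def by auto
    have "(tw x y1, tw x y3) \<in> T x" if x: "x \<in> set (walk y1 y3)" "x \<in> VX" for x
    proof -
      have ne: "x \<noteq> y1" "x \<noteq> y2" "x \<noteq> y3" using x y VY_iff by auto
      have "x \<in> set (walk y1 y2) \<or> x \<in> set (walk y2 y3)" using walk_tri x by blast
      then consider "x \<in> set (walk y1 y2)" "x \<in> set (walk y2 y3)"
        | "x \<in> set (walk y1 y2)" "x \<notin> set (walk y2 y3)"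
        | "x \<notin> set (walk y1 y2)" "x \<in> set (walk y2 y3)" by blast
      then show ?thesis
      proof cases
        case 1 then show ?thesis using h x Ttrans unfolding QT_def by blast
      next
        case 2
        then have "tw x y2 = tw x y3" using tw_notin ne by auto
        then show ?thesis using h 2 x unfolding QT_def by auto
      next
        case 3
        then have "tw x y1 = tw x y2" using tw_notin ne by auto
        then show ?thesis using h 3 x unfolding QT_def by auto
      qed
    qed
    then show "(y1,y3) \<in> QT T" unfolding QT_def using y by auto
  qed
qed

lemma QT_inv:
  assumes Tinv: "\<And>g x a b. g \<in> UU \<Longrightarrow> x \<in> VX \<Longrightarrow> (x,a) \<in> E \<Longrightarrow> (x,b) \<in> E \<Longrightarrow> (a,b) \<in> T x
      \<Longrightarrow> (g a, g b) \<in> T (g x)"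
    and g: "g \<in> UU" and yy: "(y,y') \<in> QT T"
  shows "(g y, g y') \<in> QT T"
proof -
  have y: "y \<in> VY" "y' \<in> VY" using yy unfolding QT_def by auto
  have "(tw x (g y), tw x (g y')) \<in> T x" if x: "x \<in> set (walk (g y) (g y'))" "x \<in> VX" for x
  proof -
    obtain x0 where x0: "x0 \<in> set (walk y y')" "x = g x0" using x aut_walk[OF U_aut[OF g]] by auto
    have x0X: "x0 \<in> VX" using x0 x U_type[OF g] by auto
    have ne: "x0 \<noteq> y" "x0 \<noteq> y'" using x0X y VY_iff by auto
    have "(tw x0 y, tw x0 y') \<in> T x0" using yy x0 x0X unfolding QT_def by auto
    then have "(g (tw x0 y), g (tw x0 y')) \<in> T (g x0)"
      using Tinv[OF g x0X] tw_edge ne by auto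
    then show ?thesis using x0 aut_tw[OF U_aut[OF g]] ne by simp
  qed
  then show ?thesis unfolding QT_def using y U_VY[OF g] by auto
qed

lemma prim_box_D:
  assumes "primitive_on (box_product E VX VY X Y c M N) VY"
    and "equiv VY R" and "\<And>g a b. g \<in> UU \<Longrightarrow> (a,b) \<in> R \<Longrightarrow> (g a, g b) \<in> R"
  shows "R = Id_on VY \<or> R = VY \<times> VY"
proof -
  have "R \<subseteq> VY \<times> VY" using assms(2) unfolding equiv_def refl_on_def by auto
  then have "preserves_rel (box_product E VX VY X Y c M N) R" using box_pres assms(3) by auto
  then show ?thesis using assms(1,2) unfolding primitive_on_def by auto
qed

lemma two_nbs: assumes x: "x \<in> VX" shows "\<exists>y y'. (x,y) \<in> E \<and> (x,y') \<in> E \<and> y \<noteq> y'"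
proof -
  obtain a b where ab: "a \<in> X" "b \<in> X" "a \<noteq> b" using X2 by blast
  then show ?thesis using nb_X[OF x ab(1)] nb_X[OF x ab(2)] by metis
qed

lemma N_trans_needed:
  assumes P: "primitive_on (box_product E VX VY X Y c M N) VY"
  shows "transitive_on N Y"
proof (rule ccontr)
  assume "\<not> transitive_on N Y"
  then obtain a b where ab: "a \<in> Y" "b \<in> Y" "\<forall>n\<in>N. n a \<noteq> b" unfolding transitive_on_def by blast
  define Ob where "Ob = (\<lambda>n. n a) ` N"
  define T where "T x = {(p,q). (x,p) \<in> E \<and> (x,q) \<in> E \<and> (kap x \<in> Ob \<or> p = q)}" for x
  have eq: "equiv VY (QT T)" by (rule QT_equiv) (auto simp: T_def)
  have inv: "(g y, g y') \<in> QT T" if "g \<in> UU" "(y,y') \<in> QT T" for g y y'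
  proof (rule QT_inv[OF _ that])
    fix g x p q assume g: "g \<in> UU" and x: "x \<in> VX" and e: "(x,p) \<in> E" "(x,q) \<in> E" and pq: "(p,q) \<in> T x"
    have "kap (g x) \<in> Ob" if k: "kap x \<in> Ob"
    proof -
      have pY: "p \<in> VY" using e x nbVY by auto
      obtain n where n: "n \<in> N" "\<forall>w. (p,w) \<in> E \<longrightarrow> kap (g w) = n (kap w)" using U_locY[OF g pY] by blast
      have "kap (g x) = n (kap x)" using n symE e by auto
      moreover obtain n0 where "n0 \<in> N" "kap x = n0 a" using k unfolding Ob_def by auto
      ultimately show ?thesis unfolding Ob_def using N_comp[OF n(1) \<open>n0 \<in> N\<close>] by (auto simp: image_iff intro!: bexI[of _ "n \<circ> n0"])
    qed
    then show "(g p, g q) \<in> T (g x)" using pq e aut_E[OF U_aut[OF g]] unfolding T_def by auto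
  qed
  have "QT T = Id_on VY \<or> QT T = VY \<times> VY" using prim_box_D[OF P eq] inv by blast
  moreover
  obtain y0 where y0: "y0 \<in> VY" using ex_VY by blast
  have "QT T \<noteq> Id_on VY"
  proof -
    let ?x = "nb y0 a"
    have x: "?x \<in> VX" "kap ?x = a" using nb_Y[OF y0 ab(1)] by auto
    obtain y y' where yy: "(?x,y) \<in> E" "(?x,y') \<in> E" "y \<noteq> y'" using two_nbs[OF x(1)] by blast
    have "a \<in> Ob" unfolding Ob_def using N_id by (metis id_apply image_eqI)
    then have "(y,y') \<in> QT T" using QT_dist2[OF x(1) yy] yy x unfolding T_def by auto
    then show ?thesis using yy(3) by auto
  qed
  moreover have "QT T \<noteq> VY \<times> VY"
  proof -
    let ?x = "nb y0 b"
    have x: "?x \<in> VX" "kap ?x = b" using nb_Y[OF y0 ab(2)] by auto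
    obtain y y' where yy: "(?x,y) \<in> E" "(?x,y') \<in> E" "y \<noteq> y'" using two_nbs[OF x(1)] by blast
    have "b \<notin> Ob" unfolding Ob_def using ab by auto
    then have "(y,y') \<notin> QT T" using QT_dist2[OF x(1) yy] yy x unfolding T_def by auto
    moreover have "y \<in> VY" "y' \<in> VY" using yy x nbVY by auto
    ultimately show ?thesis by auto
  qed
  ultimately show False by blast
qed

lemma M_prim_needed:
  assumes P: "primitive_on (box_product E VX VY X Y c M N) VY"
    and S: "equiv X S" "preserves_rel M S"
  shows "S = Id_on X \<or> S = X \<times> X"
proof (rule ccontr)
  assume ne: "\<not> (S = Id_on X \<or> S = X \<times> X)"
  have SX: "S \<subseteq> X \<times> X" and Sr: "\<And>a. a \<in> X \<Longrightarrow> (a,a) \<in> S"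
    and Ss: "\<And>a b. (a,b) \<in> S \<Longrightarrow> (b,a) \<in> S" and St: "\<And>a b d. (a,b) \<in> S \<Longrightarrow> (b,d) \<in> S \<Longrightarrow> (a,d) \<in> S"
    using S(1) unfolding equiv_def refl_on_def sym_def trans_def by blast+
  define T where "T x = {(p,q). (x,p) \<in> E \<and> (x,q) \<in> E \<and> (kap p, kap q) \<in> S}" for x
  have eq: "equiv VY (QT T)"
  proof (rule QT_equiv)
    fix x a assume "x \<in> VX" "(x,a) \<in> E"
    then show "(a,a) \<in> T x" unfolding T_def using Sr kap_X nbVY by auto
  qed (auto simp: T_def intro: Ss St)
  have inv: "(g y, g y') \<in> QT T" if "g \<in> UU" "(y,y') \<in> QT T" for g y y'
  proof (rule QT_inv[OF _ that])
    fix g x p q assume g: "g \<in> UU" and x: "x \<in> VX" and e: "(x,p) \<in> E" "(x,q) \<in> E" and pq: "(p,q) \<in> T x"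
    obtain m where m: "m \<in> M" "\<forall>w. (x,w) \<in> E \<longrightarrow> kap (g w) = m (kap w)" using U_locX[OF g x] by blast
    have "(m (kap p), m (kap q)) \<in> S" using S(2) m(1) pq unfolding preserves_rel_def T_def by auto
    then show "(g p, g q) \<in> T (g x)" using m e aut_E[OF U_aut[OF g]] unfolding T_def by auto
  qed
  have "QT T = Id_on VY \<or> QT T = VY \<times> VY" using prim_box_D[OF P eq] inv by blast
  moreover
  obtain x where x: "x \<in> VX" using ex_VX by blast
  have "QT T \<noteq> Id_on VY"
  proof -
    obtain a b where ab: "(a,b) \<in> S" "a \<noteq> b"
      using ne SX Sr unfolding Id_on_def by auto
    have abX: "a \<in> X" "b \<in> X" using ab SX by auto
    let ?y = "nb x a" and ?y' = "nb x b"
    have yy: "(x,?y) \<in> E" "(x,?y') \<in> E" "?y \<noteq> ?y'" using nb_X[OF x abX(1)] nb_X[OF x abX(2)] ab by metis+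
    have "(?y,?y') \<in> QT T" using QT_dist2[OF x yy] yy nb_X[OF x] abX ab unfolding T_def by auto
    then show ?thesis using yy(3) by auto
  qed
  moreover have "QT T \<noteq> VY \<times> VY"
  proof -
    obtain a b where ab: "a \<in> X" "b \<in> X" "(a,b) \<notin> S" using ne SX by auto
    have "a \<noteq> b" using ab Sr by auto
    let ?y = "nb x a" and ?y' = "nb x b"
    have yy: "(x,?y) \<in> E" "(x,?y') \<in> E" "?y \<noteq> ?y'" using nb_X[OF x ab(1)] nb_X[OF x ab(2)] \<open>a \<noteq> b\<close> by metis+
    have "(?y,?y') \<notin> QT T" using QT_dist2[OF x yy] yy nb_X[OF x] ab unfolding T_def by auto
    moreover have "?y \<in> VY" "?y' \<in> VY" using nb_X[OF x] ab by auto
    ultimately show ?thesis by auto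
  qed
  ultimately show False by blast
qed

end



context bpg begin

lemma M_reg_agree:
  assumes reg: "regular_on M X" and m: "m1 \<in> M" "m2 \<in> M" and a: "a \<in> X" "m1 a = m2 a" and b: "b \<in> X"
  shows "m1 b = m2 b"
proof -
  let ?h = "inv m1 \<circ> m2"
  have h: "?h \<in> M" using M_comp M_inv m by blast
  have "?h a = a" by (simp add: a(2)[symmetric] M_inv_app[OF m(1)])
  then have "?h b = b" using reg h a b unfolding regular_on_def by blast
  then have "m1 (inv m1 (m2 b)) = m1 b" by simp
  then show ?thesis using M_app_inv[OF m(1)] by simp
qed

lemma U_reg_const:
  assumes reg: "regular_on M X" and g: "g \<in> UU"
  shows "\<exists>m\<in>M. \<forall>y\<in>VY. kap (g y) = m (kap y)"
proof -
  obtain x0 where x0: "x0 \<in> VX" using ex_VX by blast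
  obtain m0 where m0: "m0 \<in> M" "\<forall>w. (x0,w) \<in> E \<longrightarrow> kap (g w) = m0 (kap w)" using U_locX[OF g x0] by blast
  have claim: "x \<in> VX \<longrightarrow> (\<forall>w. (x,w) \<in> E \<longrightarrow> kap (g w) = m0 (kap w))" for x
  proof (induction x rule: depth_induct[where r = x0])
    case (1 x)
    show ?case
    proof (intro impI allI)
      fix w assume x: "x \<in> VX" and e: "(x,w) \<in> E"
      show "kap (g w) = m0 (kap w)"
      proof (cases "x = x0")
        case True then show ?thesis using m0 e by auto
      next
        case False
        let ?p = "par x0 x"
        have ep: "(?p, x) \<in> E" using par_edge[OF False] .
        have pY: "?p \<in> VY" using ep x symE nbVY by blast
        have "?p \<notin> VX" using pY VY_iff by simp
        then have px0: "?p \<noteq> x0"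
        proof (rule contrapos_nn)
          assume "?p = x0" then show "?p \<in> VX" using x0 by simp
        qed
        let ?pp = "par x0 ?p"
        have epp: "(?pp, ?p) \<in> E" using par_edge[OF px0] .
        have ppX: "?pp \<in> VX" using epp pY symE nbVX by blast
        have "length (walk x0 ?pp) < length (walk x0 x)"
          using par_len[OF False] par_len[OF px0] by simp
        then have IH: "\<forall>w. (?pp,w) \<in> E \<longrightarrow> kap (g w) = m0 (kap w)" using 1 ppX by blast
        obtain mx where mx: "mx \<in> M" "\<forall>w. (x,w) \<in> E \<longrightarrow> kap (g w) = mx (kap w)" using U_locX[OF g x] by blast
        have "mx (kap ?p) = m0 (kap ?p)" using mx IH epp ep symE by metis
        moreover have kpX: "kap ?p \<in> X" using kap_X pY by auto
        moreover have "kap w \<in> X" using kap_X e x nbVY by blast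
        ultimately have "mx (kap w) = m0 (kap w)" using M_reg_agree[OF reg mx(1) m0(1)] by blast
        then show ?thesis using mx e by auto
      qed
    qed
  qed
  have "kap (g y) = m0 (kap y)" if y: "y \<in> VY" for y
  proof -
    obtain w where "(w,y) \<in> E" using has_nb by blast
    moreover then have "w \<in> VX" using y symE nbVX by blast
    ultimately show ?thesis using claim by blast
  qed
  then show ?thesis using m0 by blast
qed

lemma not_reg_needed:
  assumes P: "primitive_on (box_product E VX VY X Y c M N) VY"
  shows "\<not> regular_on M X"
proof
  assume reg: "regular_on M X"
  define K where "K = {(y,y'). y \<in> VY \<and> y' \<in> VY \<and> kap y = kap y'}"
  have eq: "equiv VY K" unfolding K_def by (rule equivI) (auto simp: refl_on_def sym_def trans_def)
  have inv: "(g y, g y') \<in> K" if g: "g \<in> UU" and yy: "(y,y') \<in> K" for g y y'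
  proof -
    obtain m where "m \<in> M" "\<forall>y\<in>VY. kap (g y) = m (kap y)" using U_reg_const[OF reg g] by blast
    then show ?thesis using yy U_VY[OF g] unfolding K_def by auto
  qed
  have "K = Id_on VY \<or> K = VY \<times> VY" using prim_box_D[OF P eq] inv by blast
  moreover
  obtain y where y: "y \<in> VY" using ex_VY by blast
  obtain b1 where b1: "b1 \<in> Y" using Y2 by blast
  let ?x = "nb y b1"
  have x: "(y, ?x) \<in> E" "?x \<in> VX" using nb_Y[OF y b1] by auto
  obtain a where a: "a \<in> X" "a \<noteq> kap y" using X2 by blast
  let ?y1 = "nb ?x a"
  have y1: "(?x, ?y1) \<in> E" "?y1 \<in> VY" "kap ?y1 = a" using nb_X[OF x(2) a(1)] by auto
  have "(y, ?y1) \<notin> K" using y1 a unfolding K_def by auto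
  then have "K \<noteq> VY \<times> VY" using y y1 by auto
  moreover have "K \<noteq> Id_on VY"
  proof -
    obtain b' where b': "b' \<in> Y" "b' \<noteq> kap ?x" using Y2 by blast
    let ?x2 = "nb ?y1 b'"
    have x2: "(?y1, ?x2) \<in> E" "?x2 \<in> VX" "kap ?x2 = b'" using nb_Y[OF y1(2) b'(1)] by auto
    have xx2: "?x \<noteq> ?x2" using x2 b' by auto
    have ky: "kap y \<in> X" using kap_X y by auto
    let ?y2 = "nb ?x2 (kap y)"
    have y2: "(?x2, ?y2) \<in> E" "?y2 \<in> VY" "kap ?y2 = kap y" using nb_X[OF x2(2) ky] by auto
    have "?y2 \<noteq> y"
    proof
      assume h: "?y2 = y"
      have yy1: "y \<noteq> ?y1" using y1 a by auto
      have "reduced_walk E [y, ?x, ?y1, ?x2]" unfolding reduced_walk_def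
        using x(1) y1(1) x2(1) yy1 xx2 by (auto simp: nth_Cons split: nat.splits)
      then have "walk y ?x2 = [y, ?x, ?y1, ?x2]" using walk_unique by force
      moreover have "walk y ?x2 = [y, ?x2]" using walk_edge symE y2(1) h by auto
      ultimately show False by simp
    qed
    then show ?thesis using y y2 unfolding K_def by auto
  qed
  ultimately show False by blast
qed

end



context bpg begin

lemma sep:
  assumes prim: "primitive_on M X" and nreg: "\<not> regular_on M X"
    and a: "a \<in> X" and b: "b \<in> X" and ab: "a \<noteq> b"
  shows "\<exists>\<sigma>\<in>M. \<sigma> a = a \<and> \<sigma> b \<noteq> b"
proof (rule ccontr)
  assume "\<not> ?thesis"
  then have H: "\<And>\<sigma>. \<sigma> \<in> M \<Longrightarrow> \<sigma> a = a \<Longrightarrow> \<sigma> b = b" by blast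
  have tr: "transitive_on M X" using prim unfolding primitive_on_def by auto
  have primR: "\<And>R. equiv X R \<Longrightarrow> preserves_rel M R \<Longrightarrow> R = Id_on X \<or> R = X \<times> X"
    using prim unfolding primitive_on_def by auto
  define ms where "ms z = (SOME m. m \<in> M \<and> m a = z)" for z
  have ms: "ms z \<in> M \<and> ms z a = z" if "z \<in> X" for z
  proof -
    have ex: "\<exists>m. m \<in> M \<and> m a = z" using tr a that unfolding transitive_on_def by blast
    show ?thesis unfolding ms_def by (rule someI_ex[OF ex])
  qed
  define s where "s z = ms z b" for z
  have s_eq: "s z = m b" if "m \<in> M" "m a = z" "z \<in> X" for z m
  proof -
    have h: "inv m \<circ> ms z \<in> M" using M_comp M_inv that ms by blast
    have "(inv m \<circ> ms z) a = a" using ms[OF that(3)] that M_inv_app by auto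
    then have "(inv m \<circ> ms z) b = b" using H h by blast
    then have "m (inv m (ms z b)) = m b" by simp
    then show ?thesis unfolding s_def using M_app_inv[OF that(1), of "ms z b"] by simp
  qed
  have sX: "s z \<in> X" if "z \<in> X" for z using ms[OF that] M_in b unfolding s_def by blast
  have s_a: "s a = b" using s_eq[OF M_id] a by simp
  have s_equi: "s (n z) = n (s z)" if "n \<in> M" "z \<in> X" for n z
  proof -
    have "n \<circ> ms z \<in> M" "(n \<circ> ms z) a = n z" using M_comp that ms by auto
    then show ?thesis using s_eq M_in that unfolding s_def by auto
  qed
  have step1: "\<sigma> a = a" if "\<sigma> \<in> M" "\<sigma> b = b" for \<sigma>
  proof -
    define K where "K = {(z,z'). z \<in> X \<and> z' \<in> X \<and> s z = s z'}"
    have "equiv X K" unfolding K_def by (rule equivI) (auto simp: refl_on_def sym_def trans_def)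
    moreover have "preserves_rel M K" unfolding preserves_rel_def K_def using s_equi M_in by auto
    ultimately have "K = Id_on X \<or> K = X \<times> X" using primR by blast
    then show ?thesis
    proof
      assume "K = X \<times> X"
      then have sb: "s z = b" if "z \<in> X" for z using that a s_a unfolding K_def by auto
      obtain z where z: "z \<in> X" "z \<noteq> b" using X2 by blast
      obtain n where n: "n \<in> M" "n b = z" using tr b z unfolding transitive_on_def by blast
      have "n b = b" using s_equi[OF n(1) a] s_a sb M_in[OF n(1) a] by simp
      then show ?thesis using n z by simp
    next
      assume K: "K = Id_on X"
      have "s (\<sigma> a) = s a" using s_equi[OF that(1) a] s_a that by simp
      then have "(\<sigma> a, a) \<in> K" unfolding K_def using M_in that a by auto
      then show ?thesis using K by auto
    qed
  qed
  define K2 where "K2 = {(z,z'). z \<in> X \<and> z' \<in> X \<and> (\<forall>\<sigma>\<in>M. \<sigma> z = z \<longleftrightarrow> \<sigma> z' = z')}"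
  have "equiv X K2" unfolding K2_def by (rule equivI) (auto simp: refl_on_def sym_def trans_def)
  moreover have "preserves_rel M K2" unfolding preserves_rel_def
  proof (intro ballI, clarify)
    fix n z z' assume n: "n \<in> M" and zz: "(z,z') \<in> K2"
    have "\<sigma> (n z) = n z \<longleftrightarrow> \<sigma> (n z') = n z'" if s: "\<sigma> \<in> M" for \<sigma>
    proof -
      let ?t = "inv n \<circ> \<sigma> \<circ> n"
      have t: "?t \<in> M" using M_comp M_inv n s by blast
      have eqv: "\<sigma> (n w) = n w \<longleftrightarrow> ?t w = w" for w
        using M_inv_app[OF n] M_app_inv[OF n] by (metis comp_apply)
      show ?thesis using eqv zz t unfolding K2_def by auto
    qed
    then show "(n z, n z') \<in> K2" using zz M_in n unfolding K2_def by auto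
  qed
  ultimately have "K2 = Id_on X \<or> K2 = X \<times> X" using primR by blast
  moreover have "(a,b) \<in> K2" unfolding K2_def using a b H step1 by blast
  ultimately have K2: "K2 = X \<times> X" using ab by auto
  have "regular_on M X" unfolding regular_on_def
  proof (intro conjI tr ballI impI)
    fix \<sigma> z y assume "\<sigma> \<in> M" "z \<in> X" "\<sigma> z = z" "y \<in> X"
    then show "\<sigma> y = y" using K2 unfolding K2_def by auto
  qed
  then show False using nreg by simp
qed

lemma nb_kap: "(x,y) \<in> E \<Longrightarrow> nb x (kap y) = y" using nb_eq kap by metis

lemma hard:
  assumes prim: "primitive_on M X" and nreg: "\<not> regular_on M X" and Ntr: "transitive_on N Y"
  shows "primitive_on (box_product E VX VY X Y c M N) VY"
  unfolding primitive_on_def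
proof (intro conjI allI impI)
  have tr: "transitive_on M X" using prim unfolding primitive_on_def by auto
  then show "transitive_on (box_product E VX VY X Y c M N) VY" using part1 by simp
  have primR: "\<And>R. equiv X R \<Longrightarrow> preserves_rel M R \<Longrightarrow> R = Id_on X \<or> R = X \<times> X"
    using prim unfolding primitive_on_def by auto
  fix R assume h: "equiv VY R \<and> preserves_rel (box_product E VX VY X Y c M N) R"
  have RY: "R \<subseteq> VY \<times> VY" using h unfolding equiv_def refl_on_def by auto
  have inv: "\<And>g a b. g \<in> UU \<Longrightarrow> (a,b) \<in> R \<Longrightarrow> (g a, g b) \<in> R" using h box_pres[OF RY] by auto
  have Rr: "\<And>a. a \<in> VY \<Longrightarrow> (a,a) \<in> R" and Rs: "\<And>a b. (a,b) \<in> R \<Longrightarrow> (b,a) \<in> R"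
    and Rt: "\<And>a b d. (a,b) \<in> R \<Longrightarrow> (b,d) \<in> R \<Longrightarrow> (a,d) \<in> R"
    using h unfolding equiv_def refl_on_def sym_def trans_def by blast+
  show "R = Id_on VY \<or> R = VY \<times> VY"
  proof (cases "R = Id_on VY")
    case True then show ?thesis by simp
  next
    case False
    then obtain y1 y2 where y12: "(y1,y2) \<in> R" "y1 \<noteq> y2" using RY Rr unfolding Id_on_def by auto
    have y12Y: "y1 \<in> VY" "y2 \<in> VY" using y12 RY by auto
    have stepA: "\<exists>x y y'. x \<in> VX \<and> (x,y) \<in> E \<and> (x,y') \<in> E \<and> y \<noteq> y' \<and> (y,y') \<in> R"
    proof -
      let ?W = "walk y1 y2" let ?n = "length ?W"
      have n2: "2 \<le> ?n" using walk_len2 y12 by auto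
      have "?W ! (?n - 1) \<notin> VX" using walk_last y12Y VY_iff by simp
      then have "even (?n - 1)" using walk_types[of "?n - 1" y1 y2] n2 y12Y VY_iff by auto
      then have n3: "3 \<le> ?n" using n2 by presburger
      let ?x = "?W ! (?n - 2)" and ?u = "?W ! (?n - 3)"
      have ex2: "(?x, y2) \<in> E"
      proof -
        have s1: "Suc (?n - 2) = ?n - 1" using n3 by arith
        have "Suc (?n - 2) < ?n" using n3 by arith
        then have "(?x, ?W ! Suc (?n - 2)) \<in> E" using walk_edges by blast
        then show ?thesis using s1 walk_last[of y1 y2] by simp
      qed
      have eux: "(?u, ?x) \<in> E"
      proof -
        have "Suc (?n - 3) = ?n - 2" using n3 by arith
        moreover have "Suc (?n - 3) < ?n" using n3 by arith
        ultimately show ?thesis using walk_edges[of "?n - 3" y1 y2] by simp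
      qed
      have uy2: "?u \<noteq> y2"
      proof -
        have "Suc (Suc (?n - 3)) = ?n - 1" using n3 by arith
        moreover have "Suc (Suc (?n - 3)) < ?n" using n3 by arith
        ultimately show ?thesis using walk_nbt[of "?n - 3" y1 y2] walk_last[of y1 y2] by simp
      qed
      have xX: "?x \<in> VX" using ex2 y12Y bip VY_iff by blast
      have exu: "(?x, ?u) \<in> E" using eux symE by blast
      have uY: "?u \<in> VY" using exu xX nbVY by blast
      let ?p = "kap ?u" and ?q = "kap y2"
      have pq: "?p \<in> X" "?q \<in> X" "?p \<noteq> ?q" using kap_X uY y12Y kap_inj[OF exu ex2] uy2 by auto
      obtain \<sigma> where s: "\<sigma> \<in> M" "\<sigma> ?p = ?p" "\<sigma> ?q \<noteq> ?q" using sep[OF prim nreg pq] by blast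
      obtain g where g: "g \<in> UU" "g ?x = ?x" "\<forall>v. tw ?x v = ?u \<longrightarrow> g v = v"
        "\<forall>w. (?x,w) \<in> E \<longrightarrow> (?x, g w) \<in> E \<and> c (?x, g w) = \<sigma> (c (?x,w))"
        using branchfix[OF xX exu s(1,2)] by blast
      have "tw ?x y1 = ?u"
      proof -
        have "?n - 1 - 1 = ?n - 2" by arith
        then have tk: "take (?n - 1) ?W = walk y1 ?x" using walk_take[of "?n - 1" y1 y2] n3 by simp
        have "walk ?x y1 = rev (take (?n - 1) ?W)" using tk walk_rev[of ?x y1] by simp
        then have "tw ?x y1 = rev (take (?n - 1) ?W) ! 1" unfolding tw_def by simp
        also have "\<dots> = take (?n - 1) ?W ! (?n - 1 - Suc 1)" using n3 by (simp add: rev_nth)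
        also have "\<dots> = ?u" using n3 by (simp add: numeral_3_eq_3)
        finally show ?thesis .
      qed
      then have gy1: "g y1 = y1" using g by blast
      have gy2: "(?x, g y2) \<in> E" "c (?x, g y2) = \<sigma> (c (?x, y2))" using g ex2 by auto
      have "c (?x, y2) = ?q" using kap ex2 by auto
      then have "g y2 \<noteq> y2" using gy2 s by auto
      moreover have "(y2, g y2) \<in> R"
      proof -
        have "(g y1, g y2) \<in> R" using inv[OF g(1) y12(1)] .
        then have "(y1, g y2) \<in> R" using gy1 by simp
        then show ?thesis using Rs Rt y12(1) by blast
      qed
      ultimately show ?thesis using xX ex2 gy2 by metis
    qed
    then obtain x0 y y' where A: "x0 \<in> VX" "(x0,y) \<in> E" "(x0,y') \<in> E" "y \<noteq> y'" "(y,y') \<in> R" by blast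
    define S where "S = {(a,b). a \<in> X \<and> b \<in> X \<and> (\<forall>x\<in>VX. (nb x a, nb x b) \<in> R)}"
    have eqS: "equiv X S" unfolding S_def
    proof (rule equivI)
      show "refl_on X {(a, b). a \<in> X \<and> b \<in> X \<and> (\<forall>x\<in>VX. (nb x a, nb x b) \<in> R)}"
        unfolding refl_on_def using Rr nb_X by auto
    qed (auto simp: sym_def trans_def intro: Rs Rt)
    have presS: "preserves_rel M S" unfolding preserves_rel_def
    proof (intro ballI, clarify)
      fix m a b assume m: "m \<in> M" and ab: "(a,b) \<in> S"
      have "(nb x (m a), nb x (m b)) \<in> R" if x: "x \<in> VX" for x
      proof -
        have k: "m (id (kap x)) = kap x" using M_Y[OF m] kap_Y[OF x] by simp
        obtain g where g: "g \<in> UU" "g x = x" "\<forall>u v. (u,v) \<in> E \<longrightarrow> (g u, g v) \<in> E \<and> c (g u, g v) = m (id (c (u,v)))"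
          using uniform[OF m N_id _ k] by blast
        have gn: "g (nb x d) = nb x (m d)" if d: "d \<in> X" for d
        proof -
          have e: "(x, nb x d) \<in> E" "c (x, nb x d) = d" using nb[of d x] cs_X[OF x] d by auto
          have "(g x, g (nb x d)) \<in> E \<and> c (g x, g (nb x d)) = m (id (c (x, nb x d)))" using g(3) e(1) by blast
          then have "(x, g (nb x d)) \<in> E" "c (x, g (nb x d)) = m d" using g(2) e(2) by auto
          then show ?thesis using nb_eq by metis
        qed
        have abX: "a \<in> X" "b \<in> X" "(nb x a, nb x b) \<in> R" using ab x unfolding S_def by auto
        have "(g (nb x a), g (nb x b)) \<in> R" using inv[OF g(1) abX(3)] .
        then show ?thesis using gn[OF abX(1)] gn[OF abX(2)] by simp
      qed
      then show "(m a, m b) \<in> S" using ab M_in[OF m] unfolding S_def by auto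
    qed
    have kyX: "kap y \<in> X" "kap y' \<in> X" using A kap_X nbVY by auto
    have "(kap y, kap y') \<in> S" unfolding S_def
    proof (intro CollectI case_prodI conjI kyX ballI)
      fix x assume x: "x \<in> VX"
      obtain \<tau> where t: "\<tau> \<in> N" "\<tau> (kap x0) = kap x" using Ntr kap_Y A(1) x unfolding transitive_on_def by blast
      have k: "id (\<tau> (kap x0)) = kap x" using t by simp
      obtain g where g: "g \<in> UU" "g x0 = x" "\<forall>u v. (u,v) \<in> E \<longrightarrow> (g u, g v) \<in> E \<and> c (g u, g v) = id (\<tau> (c (u,v)))"
        using uniform[OF M_id t(1) _ k] A(1) x by blast
      have gn: "g w = nb x (kap w)" if "(x0,w) \<in> E" for w
      proof -
        have "(x, g w) \<in> E" "c (x, g w) = \<tau> (kap w)" using g that kap by fastforce+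
        moreover have "\<tau> (kap w) = kap w" using N_X[OF t(1)] kap_X that A(1) nbVY by blast
        ultimately show ?thesis using nb_eq by metis
      qed
      show "(nb x (kap y), nb x (kap y')) \<in> R" using inv[OF g(1) A(5)] gn A(2,3) by simp
    qed
    moreover have "kap y \<noteq> kap y'" using kap_inj A by blast
    ultimately have S: "S = X \<times> X" using primR[OF eqS presS] by auto
    have d2: "(z,z') \<in> R" if "x \<in> VX" "(x,z) \<in> E" "(x,z') \<in> E" for x z z'
    proof -
      have "kap z \<in> X" "kap z' \<in> X" using that kap_X nbVY by auto
      then have "(nb x (kap z), nb x (kap z')) \<in> R" using S that unfolding S_def by auto
      then show ?thesis using nb_kap that by simp
    qed
    have "(a,b) \<in> R" if ab: "a \<in> VY" "b \<in> VY" for a b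
    proof -
      let ?W = "walk a b"
      have claim: "2 * i < length ?W \<longrightarrow> (a, ?W ! (2 * i)) \<in> R" for i
      proof (induction i)
        case 0 then show ?case using walk_hd0 Rr ab by simp
      next
        case (Suc i)
        show ?case
        proof
          assume l: "2 * Suc i < length ?W"
          have e1: "(?W ! (2*i), ?W ! Suc (2*i)) \<in> E" using walk_edges l by simp
          have e2: "(?W ! Suc (2*i), ?W ! Suc (Suc (2*i))) \<in> E" using walk_edges l by simp
          have xX: "?W ! Suc (2*i) \<in> VX" using walk_types[of "Suc (2*i)" a b] l ab VY_iff by auto
          have "(?W ! (2*i), ?W ! Suc (Suc (2*i))) \<in> R" using d2[OF xX _ e2] e1 symE by blast
          moreover have "(a, ?W ! (2*i)) \<in> R" using Suc l by simp
          ultimately show "(a, ?W ! (2 * Suc i)) \<in> R" using Rt by simp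
        qed
      qed
      have "?W ! (length ?W - 1) \<notin> VX" using walk_last ab VY_iff by simp
      then have ev: "even (length ?W - 1)" using walk_types[of "length ?W - 1" a b] walk_ne ab VY_iff by auto
      then obtain i where "length ?W - 1 = 2 * i" by (metis dvd_def)
      moreover have "length ?W - 1 < length ?W" using walk_ne by simp
      ultimately show ?thesis using claim[of i] walk_last by metis
    qed
    then show ?thesis using RY by auto
  qed
qed

end

theorem theorem5p1:
  fixes X Y :: "'a set" and M N :: "('a \<Rightarrow> 'a) set"
    and E :: "('v \<times> 'v) set" and VX VY :: "'v set" and c :: "'v \<times> 'v \<Rightarrow> 'a"
  assumes "X \<inter> Y = {}"
    and "\<exists>a\<in>X. \<exists>b\<in>X. a \<noteq> b" and "\<exists>a\<in>Y. \<exists>b\<in>Y. a \<noteq> b"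
    and "perm_group_on X M" and "M \<noteq> {id}"
    and "perm_group_on Y N" and "N \<noteq> {id}"
    and "biregular_coloured_tree E VX VY X Y c"
  shows "(transitive_on (box_product E VX VY X Y c M N) VY \<longleftrightarrow> transitive_on M X)
       \<and> (primitive_on (box_product E VX VY X Y c M N) VY \<longleftrightarrow>
            primitive_on M X \<and> \<not> regular_on M X \<and> transitive_on N Y)"
proof -
  interpret bpg E VX VY X Y c M N
    by unfold_locales (use assms in auto)
  show ?thesis
  proof (rule conjI)
    show "transitive_on (box_product E VX VY X Y c M N) VY \<longleftrightarrow> transitive_on M X" using part1 by simp
  next
    show "primitive_on (box_product E VX VY X Y c M N) VY \<longleftrightarrow>
            primitive_on M X \<and> \<not> regular_on M X \<and> transitive_on N Y"
    proof (rule iffI)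
    assume P: "primitive_on (box_product E VX VY X Y c M N) VY"
    have "transitive_on M X" using P part1 unfolding primitive_on_def by simp
    moreover have "\<forall>S. equiv X S \<and> preserves_rel M S \<longrightarrow> S = Id_on X \<or> S = X \<times> X"
      using M_prim_needed[OF P] by blast
    ultimately have "primitive_on M X" unfolding primitive_on_def by blast
    then show "primitive_on M X \<and> \<not> regular_on M X \<and> transitive_on N Y"
      using not_reg_needed[OF P] N_trans_needed[OF P] by blast
  next
    assume "primitive_on M X \<and> \<not> regular_on M X \<and> transitive_on N Y"
    then show "primitive_on (box_product E VX VY X Y c M N) VY" using hard by blast
  qed
  qed
qed


end
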